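(* Let $f$ be a $C^1$ function on $(0,\infty)$ with $f>0$ and $f(1)=1$, and set $\alpha:=f'(1)$. Then for all bounded positive invertible operators $A,B$ on a Hilbert space, $$\lim_{p\to0}P_f(A^p,B^p)^{1/p}=\exp(\alpha\log A+(1-\alpha)\log B)$$ in operator norm.
   Context: $P_f(A,B):=B^{1/2}f(B^{-1/2}AB^{-1/2})B^{1/2}$ for positive invertible $A,B$. The limit is taken as $p\to0$ with $p\neq0$ (both signs). *)

theory Defs
  imports "HOL-Analysis.Analysis" "HOL-Computational_Algebra.Polynomial"
begin

text \<open>Bounded operators on a (real) Hilbert space are elements of the blinfun type.\<close>

definition op_pow :: "('a::real_normed_vector \<Rightarrow>\<^sub>L 'a) \<Rightarrow> nat \<Rightarrow> ('a \<Rightarrow>\<^sub>L 'a)" where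
  "op_pow A n = ((\<lambda>T. A o\<^sub>L T) ^^ n) id_blinfun"

definition op_invertible :: "('a::real_normed_vector \<Rightarrow>\<^sub>L 'a) \<Rightarrow> bool" where
  "op_invertible A \<longleftrightarrow> (\<exists>B. A o\<^sub>L B = id_blinfun \<and> B o\<^sub>L A = id_blinfun)"

definition self_adjoint :: "('a::real_inner \<Rightarrow>\<^sub>L 'a) \<Rightarrow> bool" where
  "self_adjoint A \<longleftrightarrow> (\<forall>x y. inner (A x) y = inner x (A y))"

definition positive_op :: "('a::real_inner \<Rightarrow>\<^sub>L 'a) \<Rightarrow> bool" where
  "positive_op A \<longleftrightarrow> self_adjoint A \<and> (\<forall>x. inner (A x) x \<ge> 0)"

definition op_spectrum :: "('a::real_normed_vector \<Rightarrow>\<^sub>L 'a) \<Rightarrow> real set" where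
  "op_spectrum A = {c. \<not> op_invertible (A - c *\<^sub>R id_blinfun)}"

definition poly_op :: "real poly \<Rightarrow> ('a::real_normed_vector \<Rightarrow>\<^sub>L 'a) \<Rightarrow> ('a \<Rightarrow>\<^sub>L 'a)" where
  "poly_op p A = (\<Sum>i\<le>degree p. coeff p i *\<^sub>R op_pow A i)"

text \<open>Continuous functional calculus for self-adjoint operators: f(A) is the norm limit of
  p_n(A) for any sequence of real polynomials p_n converging to f uniformly on the spectrum of A
  (Weierstrass).\<close>
definition cfc :: "(real \<Rightarrow> real) \<Rightarrow> ('a::{real_inner,complete_space} \<Rightarrow>\<^sub>L 'a) \<Rightarrow> ('a \<Rightarrow>\<^sub>L 'a)" where
  "cfc f A = (THE T. \<forall>p :: nat \<Rightarrow> real poly.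
      (\<forall>e>0. \<forall>\<^sub>F n in sequentially. \<forall>t\<in>op_spectrum A. \<bar>poly (p n) t - f t\<bar> < e)
      \<longrightarrow> (\<lambda>n. poly_op (p n) A) \<longlonglongrightarrow> T)"

definition persp :: "(real \<Rightarrow> real) \<Rightarrow> ('a::{real_inner,complete_space} \<Rightarrow>\<^sub>L 'a) \<Rightarrow> ('a \<Rightarrow>\<^sub>L 'a) \<Rightarrow> ('a \<Rightarrow>\<^sub>L 'a)" where
  "persp f A B = cfc sqrt B o\<^sub>L
     cfc f (cfc (\<lambda>t. t powr (-1/2)) B o\<^sub>L A o\<^sub>L cfc (\<lambda>t. t powr (-1/2)) B) o\<^sub>L cfc sqrt B"

end

theory Submission
  imports Defs "HOL-Computational_Algebra.Fundamental_Theorem_Algebra"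
begin


lemma blinfun_Cauchy_convergent:
  fixes X :: "nat \<Rightarrow> ('a::real_normed_vector \<Rightarrow>\<^sub>L 'b::{real_normed_vector,complete_space})"
  assumes C: "Cauchy X" shows "convergent X"
proof -
  have pt: "Cauchy (\<lambda>n. X n x)" for x
  proof (rule metric_CauchyI)
    fix e :: real assume e: "e > 0"
    have "norm x + 1 > 0" using norm_ge_zero[of x] by linarith
    then have "e / (norm x + 1) > 0" using e by simp
    then obtain M where M: "\<And>m n. m \<ge> M \<Longrightarrow> n \<ge> M \<Longrightarrow> norm (X m - X n) < e / (norm x + 1)"
      using metric_CauchyD[OF C, of "e / (norm x + 1)"] by (auto simp: dist_norm)
    show "\<exists>M. \<forall>m\<ge>M. \<forall>n\<ge>M. dist (X m x) (X n x) < e"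
    proof (intro exI allI impI)
      fix m n assume "m \<ge> M" "n \<ge> M"
      have "dist (X m x) (X n x) = norm ((X m - X n) x)" by (simp add: dist_norm blinfun.diff_left)
      also have "\<dots> \<le> norm (X m - X n) * norm x" by (rule norm_blinfun)
      also have "\<dots> \<le> e / (norm x + 1) * norm x"
        using M[OF \<open>m \<ge> M\<close> \<open>n \<ge> M\<close>] by (intro mult_right_mono) auto
      also have "\<dots> < e"
      proof -
        have "norm x < norm x + 1" by simp
        then have "e * norm x < e * (norm x + 1)" using e by (intro mult_strict_left_mono)
        then show ?thesis using \<open>norm x + 1 > 0\<close> by (simp add: pos_divide_less_eq)
      qed
      finally show "dist (X m x) (X n x) < e" .
    qed
  qed
  have "\<forall>x. \<exists>l. (\<lambda>n. X n x) \<longlonglongrightarrow> l"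
    using pt Cauchy_convergent unfolding convergent_def by blast
  then obtain v where v: "\<And>x. (\<lambda>n. X n x) \<longlonglongrightarrow> v x" by metis
  obtain B where B: "\<And>n. norm (X n) \<le> B"
    using Cauchy_Bseq[OF C] by (auto simp: Bseq_def)
  have lin: "bounded_linear v"
  proof
    show "v (x + y) = v x + v y" for x y
      using LIMSEQ_unique[OF v[of "x+y"]] tendsto_add[OF v[of x] v[of y]] by (simp add: blinfun.add_right)
    show "v (r *\<^sub>R x) = r *\<^sub>R v x" for r x
      using LIMSEQ_unique[OF v[of "r *\<^sub>R x"]] tendsto_scaleR[OF tendsto_const v[of x]] by (simp add: blinfun.scaleR_right)
    show "\<exists>K. \<forall>x. norm (v x) \<le> norm x * K"
    proof (intro exI allI)
      fix x
      have "norm (v x) \<le> B * norm x"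
      proof (rule tendsto_le[OF _ tendsto_const tendsto_norm[OF v]])
        have "norm (X n x) \<le> B * norm x" for n
          using norm_blinfun[of "X n" x] mult_right_mono[OF B[of n] norm_ge_zero[of x]] by linarith
        then show "\<forall>\<^sub>F n in sequentially. norm (X n x) \<le> B * norm x" by simp
      qed simp
      then show "norm (v x) \<le> norm x * B" by (simp add: mult.commute)
    qed
  qed
  define V where "V = Blinfun v"
  have Vv: "blinfun_apply V = v" unfolding V_def using lin by (rule bounded_linear_Blinfun_apply)
  have "X \<longlonglongrightarrow> V"
  proof (rule LIMSEQ_I)
    fix e :: real assume e: "e > 0"
    obtain M where M: "\<And>m n. m \<ge> M \<Longrightarrow> n \<ge> M \<Longrightarrow> norm (X m - X n) < e/2"
      using metric_CauchyD[OF C, of "e/2"] e by (auto simp: dist_norm)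
    show "\<exists>no. \<forall>n\<ge>no. norm (X n - V) < e"
    proof (intro exI allI impI)
      fix n assume n: "n \<ge> M"
      have "norm (X n - V) \<le> e/2"
      proof (rule norm_blinfun_bound)
        fix x
        have "norm (X n x - v x) \<le> e/2 * norm x"
        proof (rule tendsto_le[OF _ tendsto_const])
          show "((\<lambda>m. norm (X n x - X m x)) \<longlongrightarrow> norm (X n x - v x)) sequentially"
            by (intro tendsto_intros v)
          show "\<forall>\<^sub>F m in sequentially. norm (X n x - X m x) \<le> e/2 * norm x"
            unfolding eventually_sequentially
          proof (intro exI allI impI)
            fix m assume "m \<ge> M"
            have "norm (X n x - X m x) = norm ((X n - X m) x)" by (simp add: blinfun.diff_left)
            also have "\<dots> \<le> norm (X n - X m) * norm x" by (rule norm_blinfun)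
            also have "\<dots> \<le> e/2 * norm x" using M[OF n \<open>m \<ge> M\<close>] by (intro mult_right_mono) auto
            finally show "norm (X n x - X m x) \<le> e/2 * norm x" .
          qed
        qed simp
        then show "norm ((X n - V) x) \<le> e/2 * norm x" by (simp add: blinfun.diff_left Vv)
      qed (use e in simp)
      then show "norm (X n - V) < e" using e by simp
    qed
  qed
  then show ?thesis unfolding convergent_def by blast
qed


lemma summable_blinfun_comparison:
  fixes f :: "nat \<Rightarrow> ('a::real_normed_vector \<Rightarrow>\<^sub>L 'b::{real_normed_vector,complete_space})"
  assumes b: "\<And>n. norm (f n) \<le> g n" and g: "summable g"
  shows "summable f"
proof -
  have diff: "(\<Sum>i<n. f i) - (\<Sum>i<m. f i) = sum f {m..<n}" if "m \<le> n" for m n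
    using sum_diff_nat_ivl[of 0 m n f] that by (simp add: atLeast0LessThan)
  have bd: "norm (sum f {m..<n}) < e" if "\<forall>m\<ge>N. \<forall>n. norm (sum g {m..<n}) < e" "m \<ge> N" for m n N e
  proof -
    have "norm (sum f {m..<n}) \<le> sum (\<lambda>i. norm (f i)) {m..<n}" by (rule norm_sum)
    also have "\<dots> \<le> sum g {m..<n}" using b by (intro sum_mono)
    also have "\<dots> \<le> norm (sum g {m..<n})" by simp
    also have "\<dots> < e" using that by blast
    finally show ?thesis .
  qed
  have "Cauchy (\<lambda>n. \<Sum>i<n. f i)"
  proof (rule metric_CauchyI)
    fix e :: real assume e: "e > 0"
    then obtain N where N: "\<forall>m\<ge>N. \<forall>n. norm (sum g {m..<n}) < e"
      using g unfolding summable_Cauchy by blast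
    show "\<exists>M. \<forall>m\<ge>M. \<forall>n\<ge>M. dist (\<Sum>i<m. f i) (\<Sum>i<n. f i) < e"
    proof (intro exI allI impI)
      fix m n assume mn: "m \<ge> N" "n \<ge> N"
      show "dist (\<Sum>i<m. f i) (\<Sum>i<n. f i) < e"
      proof (cases "m \<le> n")
        case True
        then show ?thesis using diff[OF True] bd[OF N mn(1), of n] by (metis dist_norm norm_minus_commute)
      next
        case False
        then show ?thesis using diff[of n m] bd[OF N mn(2), of m] by (simp add: dist_norm)
      qed
    qed
  qed
  then show ?thesis using blinfun_Cauchy_convergent summable_iff_convergent by blast
qed

lemma comp_assoc_L: "(A o\<^sub>L B) o\<^sub>L C = A o\<^sub>L (B o\<^sub>L C)"
  by (rule blinfun_eqI) simp
lemma comp_id_L[simp]: "A o\<^sub>L id_blinfun = A" "id_blinfun o\<^sub>L A = A"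
  by (auto intro: blinfun_eqI)
lemma comp_add_L: "A o\<^sub>L (B + C) = (A o\<^sub>L B) + (A o\<^sub>L C)" "(B + C) o\<^sub>L A = (B o\<^sub>L A) + (C o\<^sub>L A)"
  by (auto intro!: blinfun_eqI simp: blinfun.add_left blinfun.add_right blinfun.diff_left blinfun.diff_right blinfun.scaleR_left blinfun.scaleR_right blinfun.minus_left blinfun.minus_right)
lemma comp_diff_L: "A o\<^sub>L (B - C) = (A o\<^sub>L B) - (A o\<^sub>L C)" "(B - C) o\<^sub>L A = (B o\<^sub>L A) - (C o\<^sub>L A)"
  by (auto intro!: blinfun_eqI simp: blinfun.add_left blinfun.add_right blinfun.diff_left blinfun.diff_right blinfun.scaleR_left blinfun.scaleR_right blinfun.minus_left blinfun.minus_right)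
lemma comp_scale_L: "A o\<^sub>L (c *\<^sub>R B) = c *\<^sub>R (A o\<^sub>L B)" "(c *\<^sub>R B) o\<^sub>L A = c *\<^sub>R (B o\<^sub>L A)"
  by (auto intro!: blinfun_eqI simp: blinfun.add_left blinfun.add_right blinfun.diff_left blinfun.diff_right blinfun.scaleR_left blinfun.scaleR_right blinfun.minus_left blinfun.minus_right)
lemma comp_minus_L: "A o\<^sub>L (- B) = - (A o\<^sub>L B)" "(- B) o\<^sub>L A = - (B o\<^sub>L A)"
  by (auto intro!: blinfun_eqI simp: blinfun.add_left blinfun.add_right blinfun.diff_left blinfun.diff_right blinfun.scaleR_left blinfun.scaleR_right blinfun.minus_left blinfun.minus_right)
lemma comp_sum_L: "A o\<^sub>L (\<Sum>i\<in>I. B i) = (\<Sum>i\<in>I. (A o\<^sub>L B i))" "(\<Sum>i\<in>I. B i) o\<^sub>L A = (\<Sum>i\<in>I. (B i o\<^sub>L A))"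
  by (induction I rule: infinite_finite_induct) (auto simp: comp_add_L)

lemmas comp_simps_L = comp_add_L comp_diff_L comp_scale_L comp_minus_L

lemma op_pow_0[simp]: "op_pow A 0 = id_blinfun" by (simp add: op_pow_def)
lemma op_pow_Suc: "op_pow A (Suc n) = A o\<^sub>L op_pow A n" by (simp add: op_pow_def)
lemma op_pow_Suc': "op_pow A (Suc n) = op_pow A n o\<^sub>L A"
proof (induction n)
  case (Suc n)
  have "op_pow A (Suc (Suc n)) = A o\<^sub>L (op_pow A n o\<^sub>L A)" using Suc by (simp add: op_pow_Suc)
  also have "\<dots> = op_pow A (Suc n) o\<^sub>L A" by (simp add: op_pow_Suc comp_assoc_L)
  finally show ?case .
qed (simp add: op_pow_Suc)


lemma norm_op_pow: "norm (op_pow A n) \<le> norm A ^ n"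
proof (induction n)
  case 0 show ?case using norm_blinfun_id_le by simp
next
  case (Suc n)
  have "norm (op_pow A (Suc n)) \<le> norm A * norm (op_pow A n)"
    unfolding op_pow_Suc by (rule norm_blinfun_compose)
  also have "\<dots> \<le> norm A * norm A ^ n" using Suc by (simp add: mult_left_mono)
  finally show ?case by simp
qed

subsection \<open>Invertibility\<close>

lemma op_invertible_id[simp]: "op_invertible id_blinfun"
  unfolding op_invertible_def by (rule exI[of _ id_blinfun]) simp

lemma op_invertible_comp:
  assumes "op_invertible A" "op_invertible B" shows "op_invertible (A o\<^sub>L B)"
proof -
  obtain A' where A': "A o\<^sub>L A' = id_blinfun" "A' o\<^sub>L A = id_blinfun" using assms(1) unfolding op_invertible_def by blast
  obtain B' where B': "B o\<^sub>L B' = id_blinfun" "B' o\<^sub>L B = id_blinfun" using assms(2) unfolding op_invertible_def by blast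
  have "(A o\<^sub>L B) o\<^sub>L (B' o\<^sub>L A') = A o\<^sub>L ((B o\<^sub>L B') o\<^sub>L A')" by (simp only: comp_assoc_L)
  then have 1: "(A o\<^sub>L B) o\<^sub>L (B' o\<^sub>L A') = id_blinfun" using A' B' by simp
  have "(B' o\<^sub>L A') o\<^sub>L (A o\<^sub>L B) = B' o\<^sub>L ((A' o\<^sub>L A) o\<^sub>L B)" by (simp only: comp_assoc_L)
  then have 2: "(B' o\<^sub>L A') o\<^sub>L (A o\<^sub>L B) = id_blinfun" using A' B' by simp
  from 1 2 have "(A o\<^sub>L B) o\<^sub>L (B' o\<^sub>L A') = id_blinfun \<and> (B' o\<^sub>L A') o\<^sub>L (A o\<^sub>L B) = id_blinfun" by blast
  then show ?thesis unfolding op_invertible_def by blast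
qed

lemma op_invertible_scale:
  assumes "op_invertible A" "c \<noteq> 0" shows "op_invertible (c *\<^sub>R A)"
proof -
  obtain A' where A': "A o\<^sub>L A' = id_blinfun" "A' o\<^sub>L A = id_blinfun" using assms(1) unfolding op_invertible_def by blast
  have "(c *\<^sub>R A) o\<^sub>L (inverse c *\<^sub>R A') = id_blinfun" "(inverse c *\<^sub>R A') o\<^sub>L (c *\<^sub>R A) = id_blinfun"
    using A' assms(2) by (simp_all add: comp_scale_L)
  then show ?thesis unfolding op_invertible_def by blast
qed

lemma op_invertible_scale_iff:
  assumes "c \<noteq> 0" shows "op_invertible (c *\<^sub>R A) \<longleftrightarrow> op_invertible A"
  using op_invertible_scale[of "c *\<^sub>R A" "inverse c"] op_invertible_scale[of A c] assms by auto

lemma op_invertible_bounded_below: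
  assumes "op_invertible A"
  obtains d where "d > 0" "\<And>x. norm (A x) \<ge> d * norm x"
proof -
  obtain A' where A': "A' o\<^sub>L A = id_blinfun" using assms unfolding op_invertible_def by blast
  have "norm x \<le> (norm A' + 1) * norm (A x)" for x
  proof -
    have "norm x = norm (A' (A x))" using A' by (metis blinfun_apply_blinfun_compose blinfun_apply_id_blinfun)
    also have "\<dots> \<le> norm A' * norm (A x)" by (rule norm_blinfun)
    also have "\<dots> \<le> (norm A' + 1) * norm (A x)" by (simp add: mult_right_mono)
    finally show ?thesis .
  qed
  then have "inverse (norm A' + 1) * norm x \<le> norm (A x)" for x
    by (simp add: field_simps add_pos_nonneg)
  moreover have "norm A' + 1 > 0" using norm_ge_zero[of A'] by linarith
  ultimately show ?thesis using that[of "inverse (norm A' + 1)"] by simp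
qed

lemma neumann_invertible:
  fixes U :: "'a::{real_normed_vector,complete_space} \<Rightarrow>\<^sub>L 'a"
  assumes "norm U < 1" shows "op_invertible (id_blinfun - U)"
proof -
  have summ: "summable (\<lambda>n. op_pow U n)"
  proof (rule summable_blinfun_comparison)
    show "norm (op_pow U n) \<le> norm U ^ n" for n using norm_op_pow by blast
    show "summable (\<lambda>n. norm U ^ n)" using assms by (simp add: summable_geometric)
  qed
  define S where "S = (\<Sum>n. op_pow U n)"
  have lim0: "(\<lambda>n. op_pow U n) \<longlonglongrightarrow> 0"
    using summ summable_LIMSEQ_zero by blast
  have tel: "(\<lambda>n. op_pow U n - op_pow U (Suc n)) sums id_blinfun"
  proof -
    from tendsto_minus[OF lim0] have "(\<lambda>n. - op_pow U n) \<longlonglongrightarrow> 0" by simp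
    then have "(\<lambda>n. (- op_pow U (Suc n)) - (- op_pow U n)) sums (0 - (- op_pow U 0))"
      by (rule telescope_sums)
    then show ?thesis by simp
  qed
  have "(\<lambda>n. (id_blinfun - U) o\<^sub>L op_pow U n) sums ((id_blinfun - U) o\<^sub>L S)"
    unfolding S_def by (rule bounded_linear.sums[OF bounded_bilinear.bounded_linear_right[OF bounded_bilinear_blinfun_compose] summable_sums[OF summ]])
  moreover have "(\<lambda>n. (id_blinfun - U) o\<^sub>L op_pow U n) = (\<lambda>n. op_pow U n - op_pow U (Suc n))"
    by (simp add: comp_diff_L op_pow_Suc)
  ultimately have "(\<lambda>n. op_pow U n - op_pow U (Suc n)) sums ((id_blinfun - U) o\<^sub>L S)" by simp
  from sums_unique2[OF this tel] have 1: "(id_blinfun - U) o\<^sub>L S = id_blinfun" .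
  have "(\<lambda>n. op_pow U n o\<^sub>L (id_blinfun - U)) sums (S o\<^sub>L (id_blinfun - U))"
    unfolding S_def by (rule bounded_linear.sums[OF bounded_bilinear.bounded_linear_left[OF bounded_bilinear_blinfun_compose] summable_sums[OF summ]])
  moreover have "(\<lambda>n. op_pow U n o\<^sub>L (id_blinfun - U)) = (\<lambda>n. op_pow U n - op_pow U (Suc n))"
    by (simp add: comp_diff_L op_pow_Suc')
  ultimately have "(\<lambda>n. op_pow U n - op_pow U (Suc n)) sums (S o\<^sub>L (id_blinfun - U))" by simp
  from sums_unique2[OF this tel] have 2: "S o\<^sub>L (id_blinfun - U) = id_blinfun" .
  show ?thesis using 1 2 unfolding op_invertible_def by blast
qed

lemma invertible_perturb:
  fixes A :: "'a::{real_normed_vector,complete_space} \<Rightarrow>\<^sub>L 'a"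
  assumes "A o\<^sub>L R = id_blinfun" "R o\<^sub>L A = id_blinfun" "norm R * norm E < 1"
  shows "op_invertible (A + E)"
proof -
  have "A o\<^sub>L (id_blinfun - (- (R o\<^sub>L E))) = A + ((A o\<^sub>L R) o\<^sub>L E)"
    by (simp only: diff_minus_eq_add comp_add_L comp_id_L comp_assoc_L)
  also have "\<dots> = A + E" using assms(1) by (simp only: comp_id_L)
  finally have eq: "A o\<^sub>L (id_blinfun - (- (R o\<^sub>L E))) = A + E" .
  have "op_invertible (id_blinfun - (- (R o\<^sub>L E)))"
    by (rule neumann_invertible) (use norm_blinfun_compose[of R E] assms(3) in auto)
  moreover have "op_invertible A" using assms unfolding op_invertible_def by blast
  ultimately have "op_invertible (A o\<^sub>L (id_blinfun - (- (R o\<^sub>L E))))" by (intro op_invertible_comp)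
  then show ?thesis by (simp only: eq)
qed

lemma spectrum_bounded:
  fixes T :: "'a::{real_normed_vector,complete_space} \<Rightarrow>\<^sub>L 'a"
  assumes "c \<in> op_spectrum T" shows "\<bar>c\<bar> \<le> norm T"
proof (rule ccontr)
  assume "\<not> ?thesis"
  then have c: "norm T < \<bar>c\<bar>" "c \<noteq> 0" by auto
  have "norm (inverse c *\<^sub>R T) < 1" using c by (simp add: field_simps)
  then have "op_invertible (id_blinfun - inverse c *\<^sub>R T)" by (rule neumann_invertible)
  then have "op_invertible ((- c) *\<^sub>R (id_blinfun - inverse c *\<^sub>R T))"
    using c by (intro op_invertible_scale) auto
  moreover have "(- c) *\<^sub>R (id_blinfun - inverse c *\<^sub>R T) = T - c *\<^sub>R id_blinfun"
    using c by (simp add: algebra_simps)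
  ultimately show False using assms unfolding op_spectrum_def by auto
qed

lemma spectrum_closed:
  fixes T :: "'a::{real_normed_vector,complete_space} \<Rightarrow>\<^sub>L 'a"
  shows "closed (op_spectrum T)"
proof -
  have "open (- op_spectrum T)"
  proof (rule openI)
    fix c0 assume "c0 \<in> - op_spectrum T"
    then obtain R where R: "(T - c0 *\<^sub>R id_blinfun) o\<^sub>L R = id_blinfun" "R o\<^sub>L (T - c0 *\<^sub>R id_blinfun) = id_blinfun"
      unfolding op_spectrum_def op_invertible_def by auto
    define e where "e = inverse (norm R + 1)"
    have "norm R + 1 > 0" using norm_ge_zero[of R] by linarith
    then have e: "e > 0" unfolding e_def by simp
    show "\<exists>e>0. ball c0 e \<subseteq> - op_spectrum T"
    proof (intro exI conjI subsetI)
      fix c assume "c \<in> ball c0 e"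
      then have d: "\<bar>c0 - c\<bar> < e" by (simp add: dist_real_def)
      have "norm ((c0 - c) *\<^sub>R id_blinfun :: 'a \<Rightarrow>\<^sub>L 'a) \<le> \<bar>c0 - c\<bar>"
        using norm_blinfun_id_le[where 'a='a] by (simp add: mult_left_le)
      then have "norm R * norm ((c0 - c) *\<^sub>R id_blinfun :: 'a \<Rightarrow>\<^sub>L 'a) \<le> norm R * e"
        using d by (intro mult_left_mono) auto
      also have "\<dots> < 1" unfolding e_def using \<open>norm R + 1 > 0\<close> by (simp add: field_simps)
      finally have "op_invertible ((T - c0 *\<^sub>R id_blinfun) + (c0 - c) *\<^sub>R id_blinfun)"
        by (rule invertible_perturb[OF R])
      moreover have "(T - c0 *\<^sub>R id_blinfun) + (c0 - c) *\<^sub>R id_blinfun = T - c *\<^sub>R id_blinfun"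
        by (simp add: algebra_simps)
      ultimately show "c \<in> - op_spectrum T" unfolding op_spectrum_def by auto
    qed (use e in auto)
  qed
  then show ?thesis by (simp add: closed_def)
qed

lemma spectrum_compact:
  fixes T :: "'a::{real_normed_vector,complete_space} \<Rightarrow>\<^sub>L 'a"
  shows "compact (op_spectrum T)"
proof -
  have "op_spectrum T \<subseteq> cball 0 (norm T)" using spectrum_bounded by (auto simp: dist_real_def)
  then show ?thesis using spectrum_closed compact_eq_bounded_closed bounded_subset by blast
qed



subsection \<open>Self-adjoint operators\<close>

lemma sa_apply: "self_adjoint A \<Longrightarrow> A x \<bullet> y = x \<bullet> A y"
  by (simp add: self_adjoint_def)

lemma sa_id[simp]: "self_adjoint id_blinfun" by (simp add: self_adjoint_def)
lemma sa_zero[simp]: "self_adjoint 0" by (simp add: self_adjoint_def)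
lemma sa_add: "self_adjoint A \<Longrightarrow> self_adjoint B \<Longrightarrow> self_adjoint (A + B)"
  by (simp add: self_adjoint_def blinfun.add_left inner_add_left inner_add_right)
lemma sa_diff: "self_adjoint A \<Longrightarrow> self_adjoint B \<Longrightarrow> self_adjoint (A - B)"
  by (simp add: self_adjoint_def blinfun.diff_left inner_diff_left inner_diff_right)
lemma sa_scale: "self_adjoint A \<Longrightarrow> self_adjoint (c *\<^sub>R A)"
  by (simp add: self_adjoint_def blinfun.scaleR_left)
lemma sa_minus: "self_adjoint A \<Longrightarrow> self_adjoint (- A)"
  by (simp add: self_adjoint_def blinfun.minus_left)
lemma sa_comp:
  assumes "self_adjoint A" "self_adjoint B" "A o\<^sub>L B = B o\<^sub>L A"
  shows "self_adjoint (A o\<^sub>L B)"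
  unfolding self_adjoint_def
proof (intro allI)
  fix x y
  have "(A o\<^sub>L B) x \<bullet> y = B x \<bullet> A y" using assms(1) by (simp add: sa_apply)
  also have "\<dots> = x \<bullet> B (A y)" using assms(2) by (simp add: sa_apply)
  also have "\<dots> = x \<bullet> (A o\<^sub>L B) y" using assms(3) by (metis blinfun_apply_blinfun_compose)
  finally show "(A o\<^sub>L B) x \<bullet> y = x \<bullet> (A o\<^sub>L B) y" .
qed

lemma sa_sandwich:
  assumes "self_adjoint A" "self_adjoint B"
  shows "self_adjoint (A o\<^sub>L B o\<^sub>L A)"
  unfolding self_adjoint_def
proof (intro allI)
  fix x y
  have "(A o\<^sub>L B o\<^sub>L A) x \<bullet> y = B (A x) \<bullet> A y" using assms(1) by (simp add: sa_apply)
  also have "\<dots> = A x \<bullet> B (A y)" using assms(2) by (simp add: sa_apply)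
  also have "\<dots> = x \<bullet> (A o\<^sub>L B o\<^sub>L A) y" using assms(1) by (simp add: sa_apply)
  finally show "(A o\<^sub>L B o\<^sub>L A) x \<bullet> y = x \<bullet> (A o\<^sub>L B o\<^sub>L A) y" .
qed

lemma sa_limit:
  fixes X :: "'b \<Rightarrow> ('a::real_inner \<Rightarrow>\<^sub>L 'a)"
  assumes "(X \<longlongrightarrow> T) F" "F \<noteq> bot" "\<forall>\<^sub>F n in F. self_adjoint (X n)"
  shows "self_adjoint T"
  unfolding self_adjoint_def
proof (intro allI)
  fix x y
  have "((\<lambda>n. X n x) \<longlongrightarrow> T x) F" by (rule blinfun.tendsto[OF assms(1) tendsto_const])
  from tendsto_inner[OF this tendsto_const] have 1: "((\<lambda>n. X n x \<bullet> y) \<longlongrightarrow> T x \<bullet> y) F" .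
  have "((\<lambda>n. X n y) \<longlongrightarrow> T y) F" by (rule blinfun.tendsto[OF assms(1) tendsto_const])
  from tendsto_inner[OF tendsto_const this] have 2: "((\<lambda>n. x \<bullet> X n y) \<longlongrightarrow> x \<bullet> T y) F" .
  have "((\<lambda>n. X n x \<bullet> y) \<longlongrightarrow> x \<bullet> T y) F"
    using 2 by (rule tendsto_cong[THEN iffD1, rotated]) (use assms(3) in \<open>auto elim: eventually_mono simp: sa_apply\<close>)
  then show "T x \<bullet> y = x \<bullet> T y" using 1 tendsto_unique assms(2) by blast
qed

lemma inner_op_le: "\<bar>(T::'a::real_inner \<Rightarrow>\<^sub>L 'a) x \<bullet> x\<bar> \<le> norm T * (norm x)\<^sup>2"
proof -
  have "\<bar>T x \<bullet> x\<bar> \<le> norm (T x) * norm x" by (rule Cauchy_Schwarz_ineq2)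
  also have "\<dots> \<le> norm T * norm x * norm x" by (intro mult_right_mono norm_blinfun) simp
  finally show ?thesis by (simp add: power2_eq_square mult.assoc)
qed

lemma polarization:
  assumes "self_adjoint T"
  shows "4 * (T u \<bullet> v) = T (u + v) \<bullet> (u + v) - T (u - v) \<bullet> (u - v)"
proof -
  have "T v \<bullet> u = v \<bullet> T u" using assms by (rule sa_apply)
  then have "T v \<bullet> u = T u \<bullet> v" by (simp add: inner_commute)
  then show ?thesis
    by (simp add: blinfun.add_right blinfun.diff_right inner_add_left inner_add_right inner_diff_left inner_diff_right)
qed

lemma parallelogram: "(norm (u + v))\<^sup>2 + (norm (u - v))\<^sup>2 = 2 * (norm u)\<^sup>2 + 2 * (norm (v::'a::real_inner))\<^sup>2"
  by (simp add: power2_norm_eq_inner inner_add_left inner_add_right inner_diff_left inner_diff_right inner_commute)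

lemma numerical_radius_bound:
  fixes T :: "'a::real_inner \<Rightarrow>\<^sub>L 'a"
  assumes sa: "self_adjoint T" and K: "K \<ge> 0" and b: "\<And>x. \<bar>T x \<bullet> x\<bar> \<le> K * (norm x)\<^sup>2"
  shows "norm T \<le> K"
proof (rule norm_blinfun_bound[OF K])
  fix x
  have gen: "4 * \<bar>T u \<bullet> v\<bar> \<le> 2 * K * ((norm u)\<^sup>2 + (norm v)\<^sup>2)" for u v
  proof -
    have "4 * \<bar>T u \<bullet> v\<bar> = \<bar>T (u + v) \<bullet> (u + v) - T (u - v) \<bullet> (u - v)\<bar>"
      using polarization[OF sa, of u v] by simp
    also have "\<dots> \<le> \<bar>T (u + v) \<bullet> (u + v)\<bar> + \<bar>T (u - v) \<bullet> (u - v)\<bar>" by simp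
    also have "\<dots> \<le> K * (norm (u + v))\<^sup>2 + K * (norm (u - v))\<^sup>2" using b by (intro add_mono)
    also have "\<dots> = K * ((norm (u + v))\<^sup>2 + (norm (u - v))\<^sup>2)" by (simp add: distrib_left)
    also have "\<dots> = K * (2 * (norm u)\<^sup>2 + 2 * (norm v)\<^sup>2)" by (simp only: parallelogram)
    also have "\<dots> = 2 * K * ((norm u)\<^sup>2 + (norm v)\<^sup>2)" by (simp add: algebra_simps)
    finally show ?thesis .
  qed
  show "norm (T x) \<le> K * norm x"
  proof (cases "norm (T x) * norm x = 0")
    case True
    then have "T x = 0 \<or> x = 0" by simp
    then show ?thesis using K by auto
  next
    case False
    then have pos: "norm (T x) > 0" "norm x > 0" by auto
    have "T (norm (T x) *\<^sub>R x) \<bullet> (norm x *\<^sub>R T x) = norm (T x) * norm x * (norm (T x))\<^sup>2"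
      by (simp add: blinfun.scaleR_right power2_norm_eq_inner)
    then have "4 * (norm (T x) * norm x * (norm (T x))\<^sup>2) \<le>
      2 * K * ((norm (norm (T x) *\<^sub>R x))\<^sup>2 + (norm (norm x *\<^sub>R T x))\<^sup>2)"
      using gen[of "norm (T x) *\<^sub>R x" "norm x *\<^sub>R T x"] pos by simp
    also have "\<dots> = (norm (T x) * norm x * (norm (T x))) * (4 * (K * norm x))"
      by (simp add: power2_eq_square algebra_simps)
    finally have "(norm (T x) * norm x * norm (T x)) * (4 * norm (T x)) \<le> (norm (T x) * norm x * norm (T x)) * (4 * (K * norm x))"
      by (simp add: power2_eq_square algebra_simps)
    then have "4 * norm (T x) \<le> 4 * (K * norm x)"
      using pos by (subst (asm) mult_le_cancel_left_pos) auto
    then show ?thesis by simp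
  qed
qed

lemma coercive_invertible:
  fixes T :: "'a::{real_inner,complete_space} \<Rightarrow>\<^sub>L 'a"
  assumes sa: "self_adjoint T" and c: "c > 0" and co: "\<And>x. c * (norm x)\<^sup>2 \<le> T x \<bullet> x"
  shows "op_invertible T"
proof -
  define k where "k = norm T + c"
  have k1: "k > 0" unfolding k_def using c norm_ge_zero[of T] by linarith
  have k2: "c \<le> k" unfolding k_def by simp
  note k = k1 k2
  define U where "U = id_blinfun - inverse k *\<^sub>R T"
  have saU: "self_adjoint U" unfolding U_def by (intro sa_diff sa_id sa_scale sa)
  have "norm U \<le> 1 - c / k"
  proof (rule numerical_radius_bound[OF saU])
    show "0 \<le> 1 - c / k" using k by simp
    fix x
    have Ux: "U x \<bullet> x = (norm x)\<^sup>2 - (T x \<bullet> x) / k"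
      by (simp add: U_def blinfun.diff_left blinfun.scaleR_left inner_diff_left power2_norm_eq_inner divide_inverse mult.commute)
    have up: "T x \<bullet> x \<le> norm T * (norm x)\<^sup>2" using inner_op_le[of T x] by simp
    have "(T x \<bullet> x) / k \<le> (norm T * (norm x)\<^sup>2) / k" using up k by (simp add: divide_right_mono)
    also have "\<dots> \<le> (norm x)\<^sup>2" using k c by (simp add: k_def field_simps mult_right_mono)
    finally have lo: "U x \<bullet> x \<ge> 0" using Ux by simp
    have "c * (norm x)\<^sup>2 / k \<le> (T x \<bullet> x) / k" using co k by (simp add: divide_right_mono)
    then have "U x \<bullet> x \<le> (1 - c / k) * (norm x)\<^sup>2" using Ux by (simp add: algebra_simps)
    then show "\<bar>U x \<bullet> x\<bar> \<le> (1 - c / k) * (norm x)\<^sup>2" using lo by simp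
  qed
  also have "\<dots> < 1" using k c by simp
  finally have "op_invertible (id_blinfun - U)" by (rule neumann_invertible)
  moreover have "id_blinfun - U = inverse k *\<^sub>R T" by (simp add: U_def)
  ultimately show ?thesis using op_invertible_scale_iff[of "inverse k" T] k by simp
qed



subsection \<open>Positive operators and the spectral norm bound\<close>

lemma discriminant_le:
  fixes a b c :: real
  assumes c: "c \<ge> 0" and h: "\<And>t. 0 \<le> a + 2 * t * b + t\<^sup>2 * c"
  shows "b\<^sup>2 \<le> a * c"
proof (cases "c = 0")
  case True
  have "b = 0"
  proof (rule ccontr)
    assume b: "b \<noteq> 0"
    have "0 \<le> a + 2 * (- (a + 1) / (2 * b)) * b + (- (a + 1) / (2 * b))\<^sup>2 * c" by (rule h)
    also have "\<dots> = -1" using b True by (simp add: field_simps)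
    finally show False by simp
  qed
  then show ?thesis using True by simp
next
  case False
  then have cp: "c > 0" using c by simp
  have "0 \<le> a + 2 * (- b / c) * b + (- b / c)\<^sup>2 * c" by (rule h)
  also have "\<dots> = a - b\<^sup>2 / c" using cp by (simp add: field_simps power2_eq_square)
  finally have "b\<^sup>2 / c \<le> a" by simp
  then show ?thesis using cp by (simp add: pos_divide_le_eq mult.commute)
qed

lemma pos_cs:
  assumes P: "positive_op P"
  shows "(P x \<bullet> y)\<^sup>2 \<le> (P x \<bullet> x) * (P y \<bullet> y)"
proof (rule discriminant_le)
  show "0 \<le> P y \<bullet> y" using P by (simp add: positive_op_def)
  fix t :: real
  have "P y \<bullet> x = y \<bullet> P x" using P by (simp add: positive_op_def sa_apply)
  then have sa: "P y \<bullet> x = P x \<bullet> y" by (simp add: inner_commute)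
  have "0 \<le> P (x + t *\<^sub>R y) \<bullet> (x + t *\<^sub>R y)" using P by (simp add: positive_op_def)
  also have "\<dots> = P x \<bullet> x + t * (P x \<bullet> y) + t * (P y \<bullet> x) + t * t * (P y \<bullet> y)"
    by (simp add: blinfun.add_right blinfun.scaleR_right inner_add_left inner_add_right algebra_simps)
  also have "\<dots> = P x \<bullet> x + 2 * t * (P x \<bullet> y) + t\<^sup>2 * (P y \<bullet> y)"
    using sa by (simp add: power2_eq_square algebra_simps)
  finally show "0 \<le> P x \<bullet> x + 2 * t * (P x \<bullet> y) + t\<^sup>2 * (P y \<bullet> y)" .
qed

lemma pos_norm_sq:
  assumes P: "positive_op P"
  shows "(norm (P x))\<^sup>2 \<le> norm P * (P x \<bullet> x)"
proof (cases "norm (P x) = 0")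
  case True
  then show ?thesis using P by (simp add: positive_op_def)
next
  case False
  have px: "P x \<bullet> x \<ge> 0" using P by (simp add: positive_op_def)
  have "((norm (P x))\<^sup>2)\<^sup>2 = (P x \<bullet> P x)\<^sup>2" by (simp add: power2_norm_eq_inner)
  also have "\<dots> \<le> (P x \<bullet> x) * (P (P x) \<bullet> P x)" by (rule pos_cs[OF P])
  also have "\<dots> \<le> (P x \<bullet> x) * (norm P * (norm (P x))\<^sup>2)"
    using inner_op_le[of P "P x"] px by (intro mult_left_mono) auto
  finally have 1: "((norm (P x))\<^sup>2)\<^sup>2 \<le> (P x \<bullet> x) * (norm P * (norm (P x))\<^sup>2)" .
  have A: "((norm (P x))\<^sup>2)\<^sup>2 = (norm (P x))\<^sup>2 * (norm (P x))\<^sup>2" by (simp only: power2_eq_square)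
  have B: "(P x \<bullet> x) * (norm P * (norm (P x))\<^sup>2) = (norm P * (P x \<bullet> x)) * (norm (P x))\<^sup>2" by simp
  have prod: "(norm (P x))\<^sup>2 * (norm (P x))\<^sup>2 \<le> (norm P * (P x \<bullet> x)) * (norm (P x))\<^sup>2"
    using 1 by (simp only: A B)
  have pos: "(norm (P x))\<^sup>2 > 0" using False by simp
  show ?thesis using mult_le_cancel_right_pos[OF pos] prod by blast
qed

lemma pos_bounded_below_coercive:
  assumes P: "positive_op P" and K: "K > 0" "norm P \<le> 2 * K"
    and d: "\<And>x. norm (P x) \<ge> d * norm x" "d > 0"
  shows "P x \<bullet> x \<ge> d\<^sup>2 / (2 * K) * (norm x)\<^sup>2"
proof -
  have px: "P x \<bullet> x \<ge> 0" using P by (simp add: positive_op_def)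
  have "d\<^sup>2 * (norm x)\<^sup>2 \<le> (norm (P x))\<^sup>2"
    using d(1)[of x] d(2) by (metis power_mono power_mult_distrib mult_nonneg_nonneg less_imp_le norm_ge_zero)
  also have "\<dots> \<le> norm P * (P x \<bullet> x)" by (rule pos_norm_sq[OF P])
  also have "\<dots> \<le> 2 * K * (P x \<bullet> x)" using K px by (intro mult_right_mono) auto
  finally show ?thesis using K by (simp add: field_simps)
qed

lemma spec_norm_bound:
  fixes T :: "'a::{real_inner,complete_space} \<Rightarrow>\<^sub>L 'a"
  assumes sa: "self_adjoint T" and beta: "\<beta> \<ge> 0" and sp: "\<And>l. l \<in> op_spectrum T \<Longrightarrow> \<bar>l\<bar> \<le> \<beta>"
  shows "norm T \<le> \<beta>"
proof (rule ccontr)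
  assume neg: "\<not> norm T \<le> \<beta>"
  define K where "K = norm T"
  have K: "K > \<beta>" "K > 0" using neg beta by (auto simp: K_def)
  have "K \<notin> op_spectrum T" "- K \<notin> op_spectrum T" using sp K by force+
  then have inv1: "op_invertible (T - K *\<^sub>R id_blinfun)" and inv2: "op_invertible (T + K *\<^sub>R id_blinfun)"
    unfolding op_spectrum_def by auto
  obtain d1 where d1: "d1 > 0" "\<And>x. norm ((T - K *\<^sub>R id_blinfun) x) \<ge> d1 * norm x"
    using op_invertible_bounded_below[OF inv1] by blast
  obtain d2 where d2: "d2 > 0" "\<And>x. norm ((T + K *\<^sub>R id_blinfun) x) \<ge> d2 * norm x"
    using op_invertible_bounded_below[OF inv2] by blast
  define d where "d = min d1 d2"
  have d: "d > 0" using d1 d2 by (simp add: d_def)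
  define P1 where "P1 = K *\<^sub>R id_blinfun - T"
  define P2 where "P2 = K *\<^sub>R id_blinfun + T"
  have nid: "norm (K *\<^sub>R (id_blinfun :: 'a \<Rightarrow>\<^sub>L 'a)) \<le> K"
    using norm_blinfun_id_le[where 'a='a] K by (simp add: mult_left_le)
  have P1pos: "positive_op P1"
    unfolding positive_op_def P1_def
  proof (intro conjI allI)
    show "self_adjoint (K *\<^sub>R id_blinfun - T)" by (intro sa_diff sa_scale sa_id sa)
    fix x
    have "T x \<bullet> x \<le> K * (norm x)\<^sup>2" using inner_op_le[of T x] by (simp add: K_def)
    then show "0 \<le> (K *\<^sub>R id_blinfun - T) x \<bullet> x"
      by (simp add: blinfun.diff_left blinfun.scaleR_left inner_diff_left power2_norm_eq_inner)
  qed
  have P2pos: "positive_op P2"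
    unfolding positive_op_def P2_def
  proof (intro conjI allI)
    show "self_adjoint (K *\<^sub>R id_blinfun + T)" by (intro sa_add sa_scale sa_id sa)
    fix x
    have "- (T x \<bullet> x) \<le> K * (norm x)\<^sup>2" using inner_op_le[of T x] by (simp add: K_def)
    then show "0 \<le> (K *\<^sub>R id_blinfun + T) x \<bullet> x"
      by (simp add: blinfun.add_left blinfun.scaleR_left inner_add_left power2_norm_eq_inner)
  qed
  have nP1: "norm P1 \<le> 2 * K" unfolding P1_def using norm_triangle_ineq4[of "K *\<^sub>R id_blinfun" T] nid by (simp add: K_def)
  have nP2: "norm P2 \<le> 2 * K" unfolding P2_def using norm_triangle_ineq[of "K *\<^sub>R id_blinfun" T] nid by (simp add: K_def)
  have bb1: "norm (P1 x) \<ge> d * norm x" for x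
  proof -
    have "P1 x = - ((T - K *\<^sub>R id_blinfun) x)" by (simp add: P1_def blinfun.diff_left)
    then have "norm (P1 x) = norm ((T - K *\<^sub>R id_blinfun) x)" by simp
    moreover have "d * norm x \<le> d1 * norm x" by (intro mult_right_mono) (auto simp: d_def)
    ultimately show ?thesis using d1(2)[of x] by linarith
  qed
  have bb2: "norm (P2 x) \<ge> d * norm x" for x
  proof -
    have "P2 x = (T + K *\<^sub>R id_blinfun) x" by (simp add: P2_def blinfun.add_left)
    moreover have "d * norm x \<le> d2 * norm x" by (intro mult_right_mono) (auto simp: d_def)
    ultimately show ?thesis using d2(2)[of x] by simp
  qed
  have c1: "P1 x \<bullet> x \<ge> d\<^sup>2 / (2 * K) * (norm x)\<^sup>2" for x
    by (rule pos_bounded_below_coercive[OF P1pos K(2) nP1 bb1 d])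
  have c2: "P2 x \<bullet> x \<ge> d\<^sup>2 / (2 * K) * (norm x)\<^sup>2" for x
    by (rule pos_bounded_below_coercive[OF P2pos K(2) nP2 bb2 d])
  define e where "e = min K (d\<^sup>2 / (4 * K))"
  have e: "e > 0" "e \<le> K" "e \<le> d\<^sup>2 / (4 * K)" using K d by (auto simp: e_def)
  have "\<not> norm T \<le> K - e"
    using e K by (simp add: K_def)
  have "\<exists>x. \<not> \<bar>T x \<bullet> x\<bar> \<le> (K - e) * (norm x)\<^sup>2"
  proof (rule ccontr)
    assume "\<not> ?thesis"
    then have "\<And>x. \<bar>T x \<bullet> x\<bar> \<le> (K - e) * (norm x)\<^sup>2" by blast
    moreover have "0 \<le> K - e" using e by simp
    ultimately have "norm T \<le> K - e" using numerical_radius_bound[OF sa, of "K - e"] by blast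
    then show False using \<open>\<not> norm T \<le> K - e\<close> by blast
  qed
  then obtain x where x: "\<bar>T x \<bullet> x\<bar> > (K - e) * (norm x)\<^sup>2" by (auto simp: not_le)
  have xn: "(norm x)\<^sup>2 > 0"
  proof (rule ccontr)
    assume "\<not> ?thesis" then have "x = 0" by simp
    then show False using x by simp
  qed
  have lt: "d\<^sup>2 / (4 * K) * (norm x)\<^sup>2 < d\<^sup>2 / (2 * K) * (norm x)\<^sup>2"
    using xn K d by (intro mult_strict_right_mono) (auto simp: field_simps)
  show False
  proof (cases "T x \<bullet> x \<ge> 0")
    case True
    then have "T x \<bullet> x > (K - e) * (norm x)\<^sup>2" using x by simp
    then have "P1 x \<bullet> x < e * (norm x)\<^sup>2"
      by (simp add: P1_def blinfun.diff_left blinfun.scaleR_left inner_diff_left power2_norm_eq_inner algebra_simps)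
    also have "\<dots> \<le> d\<^sup>2 / (4 * K) * (norm x)\<^sup>2" using e xn by (intro mult_right_mono) auto
    finally show False using c1[of x] lt by simp
  next
    case False
    then have "- (T x \<bullet> x) > (K - e) * (norm x)\<^sup>2" using x by simp
    then have "P2 x \<bullet> x < e * (norm x)\<^sup>2"
      by (simp add: P2_def blinfun.add_left blinfun.scaleR_left inner_add_left power2_norm_eq_inner algebra_simps)
    also have "\<dots> \<le> d\<^sup>2 / (4 * K) * (norm x)\<^sup>2" using e xn by (intro mult_right_mono) auto
    finally show False using c2[of x] lt by simp
  qed
qed

lemma trivial_invertible:
  assumes "(id_blinfun :: 'a::real_normed_vector \<Rightarrow>\<^sub>L 'a) = 0"
  shows "op_invertible (A :: 'a \<Rightarrow>\<^sub>L 'a)"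
proof -
  have "A = A o\<^sub>L id_blinfun" by simp
  also have "\<dots> = 0" using assms by simp
  finally have "A = 0" .
  then show ?thesis unfolding op_invertible_def using assms by (intro exI[of _ 0]) simp
qed

lemma empty_spectrum_trivial:
  fixes T :: "'a::{real_inner,complete_space} \<Rightarrow>\<^sub>L 'a"
  assumes sa: "self_adjoint T" and e: "op_spectrum T = {}"
  shows "(id_blinfun :: 'a \<Rightarrow>\<^sub>L 'a) = 0"
proof -
  have "norm T \<le> 0" using spec_norm_bound[OF sa, of 0] e by auto
  then have T0: "T = 0" by simp
  have "0 \<notin> op_spectrum T" using e by simp
  then have "op_invertible (0 :: 'a \<Rightarrow>\<^sub>L 'a)" using T0 by (simp add: op_spectrum_def)
  then obtain B where "(0 :: 'a \<Rightarrow>\<^sub>L 'a) o\<^sub>L B = id_blinfun" unfolding op_invertible_def by blast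
  then show ?thesis by simp
qed



subsection \<open>Polynomials of operators\<close>

lemma poly_op_ge:
  assumes "degree p \<le> n"
  shows "poly_op p A = (\<Sum>i\<le>n. coeff p i *\<^sub>R op_pow A i)"
  unfolding poly_op_def
  by (rule sum.mono_neutral_left) (use assms in \<open>auto intro!: coeff_eq_0 simp: not_le\<close>)

lemma poly_op_0[simp]: "poly_op 0 A = 0"
  by (simp add: poly_op_def)

lemma poly_op_pCons: "poly_op (pCons a p) A = a *\<^sub>R id_blinfun + (A o\<^sub>L poly_op p A)"
proof -
  have "poly_op (pCons a p) A = (\<Sum>i\<le>Suc (degree p). coeff (pCons a p) i *\<^sub>R op_pow A i)"
    by (rule poly_op_ge) (simp add: degree_pCons_le)
  also have "\<dots> = a *\<^sub>R id_blinfun + (\<Sum>i\<le>degree p. coeff p i *\<^sub>R op_pow A (Suc i))"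
    by (subst sum.atMost_Suc_shift) simp
  also have "(\<Sum>i\<le>degree p. coeff p i *\<^sub>R op_pow A (Suc i)) = A o\<^sub>L poly_op p A"
    by (simp add: poly_op_def comp_sum_L comp_scale_L op_pow_Suc)
  finally show ?thesis .
qed

lemma poly_op_add: "poly_op (p + q) A = poly_op p A + poly_op q A"
proof -
  define n where "n = max (degree p) (degree q)"
  have "poly_op (p + q) A = (\<Sum>i\<le>n. coeff (p + q) i *\<^sub>R op_pow A i)"
    by (rule poly_op_ge) (simp add: n_def degree_add_le)
  also have "\<dots> = (\<Sum>i\<le>n. coeff p i *\<^sub>R op_pow A i) + (\<Sum>i\<le>n. coeff q i *\<^sub>R op_pow A i)"
    by (simp add: scaleR_add_left sum.distrib)
  also have "\<dots> = poly_op p A + poly_op q A"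
    using poly_op_ge[of p n A] poly_op_ge[of q n A] by (simp add: n_def)
  finally show ?thesis .
qed

lemma poly_op_smult: "poly_op (smult c p) A = c *\<^sub>R poly_op p A"
proof -
  have "poly_op (smult c p) A = (\<Sum>i\<le>degree p. coeff (smult c p) i *\<^sub>R op_pow A i)"
    by (rule poly_op_ge) simp
  also have "\<dots> = c *\<^sub>R poly_op p A" by (simp add: poly_op_def scaleR_sum_right)
  finally show ?thesis .
qed

lemma poly_op_minus: "poly_op (- p) A = - poly_op p A"
  using poly_op_smult[of "-1" p A] by simp

lemma poly_op_diff: "poly_op (p - q) A = poly_op p A - poly_op q A"
  using poly_op_add[of p "- q" A] poly_op_minus[of q A] by simp

lemma poly_op_const: "poly_op [:c:] A = c *\<^sub>R id_blinfun"
  by (simp add: poly_op_pCons)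

lemma poly_op_X: "poly_op [:0, 1:] A = A"
  by (simp add: poly_op_pCons poly_op_const)

lemma poly_op_1: "poly_op 1 A = id_blinfun"
  using poly_op_const[of 1 A] by (simp add: one_pCons)

lemma poly_op_mult: "poly_op (p * q) A = poly_op p A o\<^sub>L poly_op q A"
proof (induction p)
  case 0 then show ?case by simp
next
  case (pCons a p)
  have "poly_op (pCons a p * q) A = a *\<^sub>R poly_op q A + (A o\<^sub>L poly_op (p * q) A)"
    by (simp add: poly_op_add poly_op_smult poly_op_pCons)
  also have "\<dots> = poly_op (pCons a p) A o\<^sub>L poly_op q A"
    by (simp add: pCons.IH poly_op_pCons comp_add_L comp_scale_L comp_assoc_L)
  finally show ?case .
qed

lemma poly_op_commute: "poly_op p A o\<^sub>L poly_op q A = poly_op q A o\<^sub>L poly_op p A"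
  by (metis poly_op_mult mult.commute)

lemma poly_op_commute_A: "poly_op p A o\<^sub>L A = A o\<^sub>L poly_op p A"
  using poly_op_commute[of p A "[:0,1:]"] by (simp add: poly_op_X)

lemma poly_op_sa: "self_adjoint A \<Longrightarrow> self_adjoint (poly_op p A)"
proof (induction p)
  case 0 then show ?case by simp
next
  case (pCons a p)
  have "self_adjoint (A o\<^sub>L poly_op p A)"
    by (rule sa_comp[OF pCons.prems pCons.IH[OF pCons.prems]]) (simp add: poly_op_commute_A)
  then show ?case unfolding poly_op_pCons by (intro sa_add sa_scale sa_id)
qed

lemma poly_op_linear_factor: "poly_op [:- x, 1:] A = A - x *\<^sub>R id_blinfun"
  by (simp add: poly_op_pCons)

subsection \<open>Complex evaluation of real polynomials\<close>

definition cpoly :: "real poly \<Rightarrow> complex \<Rightarrow> complex" where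
  "cpoly p z = poly (map_poly complex_of_real p) z"

lemma map_of_real_add: "map_poly complex_of_real (p + q) = map_poly complex_of_real p + map_poly complex_of_real q"
  by (rule poly_eqI) (simp add: coeff_map_poly)

lemma map_of_real_mult: "map_poly complex_of_real (p * q) = map_poly complex_of_real p * map_poly complex_of_real q"
  by (rule poly_eqI) (simp add: coeff_map_poly coeff_mult)

lemma cpoly_add: "cpoly (p + q) z = cpoly p z + cpoly q z"
  by (simp add: cpoly_def map_of_real_add)

lemma cpoly_mult: "cpoly (p * q) z = cpoly p z * cpoly q z"
  by (simp add: cpoly_def map_of_real_mult)

lemma cpoly_real: "cpoly p (complex_of_real x) = complex_of_real (poly p x)"
  unfolding cpoly_def by (induction p) (auto simp: map_poly_pCons)

lemma cpoly_0[simp]: "cpoly 0 z = 0" by (simp add: cpoly_def)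

lemma cpoly_pCons: "cpoly (pCons a p) z = complex_of_real a + z * cpoly p z"
  by (simp add: cpoly_def map_poly_pCons)

lemma cpoly_root_exists:
  assumes "degree p > 0"
  shows "\<exists>z. cpoly p z = 0"
proof -
  have "degree (map_poly complex_of_real p) = degree p"
    by (rule degree_map_poly) simp
  then have "degree (map_poly complex_of_real p) \<noteq> 0" using assms by simp
  then have "\<not> constant (poly (map_poly complex_of_real p))"
    using constant_degree[of "map_poly complex_of_real p"] by simp
  then show ?thesis unfolding cpoly_def using fundamental_theorem_of_algebra by blast
qed

lemma deg1_form:
  fixes m :: "'a::zero poly"
  assumes "degree m \<le> 1" shows "m = [:coeff m 0, coeff m 1:]"
proof (rule poly_eqI)
  fix n
  show "coeff m n = coeff [:coeff m 0, coeff m 1:] n"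
  proof (cases n)
    case (Suc k)
    show ?thesis
    proof (cases k)
      case (Suc j)
      then show ?thesis using \<open>n = Suc k\<close> assms by (simp add: coeff_eq_0)
    qed (simp add: \<open>n = Suc k\<close>)
  qed simp
qed

lemma real_poly_factor:
  fixes r :: "real poly"
  assumes "degree r > 0"
  shows "(\<exists>x q. r = [:-x, 1:] * q \<and> poly r x = 0) \<or>
         (\<exists>a b q. b \<noteq> 0 \<and> r = [:a\<^sup>2 + b\<^sup>2, -2 * a, 1:] * q)"
proof -
  obtain z where z: "cpoly r z = 0" using cpoly_root_exists[OF assms] by blast
  show ?thesis
  proof (cases "Im z = 0")
    case True
    then have zr: "z = complex_of_real (Re z)" by (simp add: complex_eq_iff)
    have "poly r (Re z) = 0" using z cpoly_real[of r "Re z"] zr by simp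
    moreover obtain q where "r = [:- Re z, 1:] * q" using poly_eq_0_iff_dvd[of r "Re z"] calculation by (auto elim: dvdE)
    ultimately show ?thesis by blast
  next
    case False
    define Q where "Q = [:(Re z)\<^sup>2 + (Im z)\<^sup>2, -2 * Re z, 1:]"
    have Qz: "cpoly Q z = 0"
      by (simp add: Q_def cpoly_pCons complex_eq_iff power2_eq_square algebra_simps)
    have Q0: "Q \<noteq> 0" by (simp add: Q_def)
    define m where "m = r mod Q"
    have "r = r div Q * Q + m" by (simp add: m_def)
    then have "cpoly r z = cpoly (r div Q) z * cpoly Q z + cpoly m z"
      by (metis cpoly_add cpoly_mult)
    then have mz: "cpoly m z = 0" using z Qz by simp
    have "degree m < 2 \<or> m = 0" using degree_mod_less[OF Q0, of r] by (auto simp: m_def Q_def)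
    then have "degree m \<le> 1" by auto
    then have mform: "m = [:coeff m 0, coeff m 1:]"
      by (rule deg1_form)
    have "cpoly m z = complex_of_real (coeff m 0) + z * complex_of_real (coeff m 1)"
      by (subst mform) (simp add: cpoly_pCons)
    then have h: "complex_of_real (coeff m 0) + z * complex_of_real (coeff m 1) = 0" using mz by simp
    have "Im (complex_of_real (coeff m 0) + z * complex_of_real (coeff m 1)) = 0" using h by simp
    then have i1: "coeff m 1 * Im z = 0" by auto
    have "Re (complex_of_real (coeff m 0) + z * complex_of_real (coeff m 1)) = 0" using h by simp
    then have i2: "coeff m 0 + Re z * coeff m 1 = 0" by auto
    note i1 i2
    then have "coeff m 1 = 0" "coeff m 0 = 0" using False by auto
    then have "m = 0" using mform by simp
    then have "r = Q * (r div Q)" using \<open>r = r div Q * Q + m\<close> by (simp add: mult.commute)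
    then show ?thesis using False unfolding Q_def by blast
  qed
qed



lemma deg0_form: "degree (r :: 'a::zero poly) = 0 \<Longrightarrow> r = [:coeff r 0:]"
  by (rule poly_eqI) (auto simp: coeff_eq_0 coeff_pCons split: nat.splits)

lemma poly_op_invertible:
  fixes S :: "'a::{real_inner,complete_space} \<Rightarrow>\<^sub>L 'a"
  assumes sa: "self_adjoint S" and nz: "\<And>t. t \<in> op_spectrum S \<Longrightarrow> poly r t \<noteq> 0"
  shows "op_invertible (poly_op r S)"
proof (cases "(id_blinfun :: 'a \<Rightarrow>\<^sub>L 'a) = 0")
  case True then show ?thesis by (rule trivial_invertible)
next
  case False
  then have ne: "op_spectrum S \<noteq> {}" using empty_spectrum_trivial[OF sa] by blast
  have "\<forall>r. degree r = n \<longrightarrow> (\<forall>t\<in>op_spectrum S. poly r t \<noteq> 0) \<longrightarrow> op_invertible (poly_op r S)" for n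
  proof (induction n rule: less_induct)
    case (less n)
    show ?case
    proof (intro allI impI)
      fix r :: "real poly" assume dr: "degree r = n" and nzr: "\<forall>t\<in>op_spectrum S. poly r t \<noteq> 0"
      show "op_invertible (poly_op r S)"
      proof (cases "degree r = 0")
        case True
        then have rf: "r = [:coeff r 0:]" by (rule deg0_form)
        obtain t where t: "t \<in> op_spectrum S" using ne by blast
        have "poly r t = coeff r 0" by (subst rf) simp
        then have c0: "coeff r 0 \<noteq> 0" using nzr t by auto
        have "poly_op r S = coeff r 0 *\<^sub>R id_blinfun" by (subst rf) (simp add: poly_op_const)
        then show ?thesis using op_invertible_scale[OF op_invertible_id c0] by simp
      next
        case False
        then have r0: "r \<noteq> 0" by auto
        have "0 < degree r" using False by simp
        from real_poly_factor[OF this] show ?thesis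
        proof (elim disjE exE conjE)
          fix x q assume rq: "r = [:- x, 1:] * q" and rx: "poly r x = 0"
          have q0: "q \<noteq> 0" using r0 rq by auto
          have "degree ([:- x, 1:] * q) = degree [:- x, 1:] + degree q" by (rule degree_mult_eq) (use q0 in simp_all)
          then have dq: "degree q < n" using dr rq by simp
          have nzq: "\<forall>t\<in>op_spectrum S. poly q t \<noteq> 0" using nzr rq by auto
          have iq: "op_invertible (poly_op q S)" using less.IH[OF dq] nzq by blast
          have "x \<notin> op_spectrum S" using nzr rx by auto
          then have "op_invertible (poly_op [:- x, 1:] S)"
            by (simp add: poly_op_linear_factor op_spectrum_def)
          then show ?thesis unfolding rq poly_op_mult using iq by (rule op_invertible_comp)
        next
          fix a b q assume b: "b \<noteq> 0" and rq: "r = [:a\<^sup>2 + b\<^sup>2, - 2 * a, 1:] * q"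
          define Q where "Q = [:a\<^sup>2 + b\<^sup>2, - 2 * a, 1:]"
          have Q0: "Q \<noteq> 0" by (simp add: Q_def)
          have q0: "q \<noteq> 0" using r0 rq by auto
          have "degree (Q * q) = degree Q + degree q" by (rule degree_mult_eq) (use q0 Q0 in simp_all)
          then have dq: "degree q < n" using dr rq by (simp add: Q_def)
          have nzq: "\<forall>t\<in>op_spectrum S. poly q t \<noteq> 0" using nzr rq by auto
          have iq: "op_invertible (poly_op q S)" using less.IH[OF dq] nzq by blast
          have Qeq: "Q = [:- a, 1:] * [:- a, 1:] + [:b\<^sup>2:]"
            by (simp add: Q_def power2_eq_square)
          define L where "L = S - a *\<^sub>R id_blinfun"
          have saL: "self_adjoint L" unfolding L_def by (intro sa_diff sa_scale sa sa_id)
          have QS: "poly_op Q S = (L o\<^sub>L L) + b\<^sup>2 *\<^sub>R id_blinfun"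
            unfolding Qeq poly_op_add poly_op_mult poly_op_linear_factor poly_op_const L_def ..
          have "op_invertible (poly_op Q S)"
          proof (rule coercive_invertible)
            show "self_adjoint (poly_op Q S)" by (rule poly_op_sa[OF sa])
            show "0 < b\<^sup>2" using b by simp
            fix x
            have "(L o\<^sub>L L) x \<bullet> x = L x \<bullet> L x" using saL by (simp add: sa_apply)
            then have "(L o\<^sub>L L) x \<bullet> x \<ge> 0" by simp
            then show "b\<^sup>2 * (norm x)\<^sup>2 \<le> poly_op Q S x \<bullet> x"
              by (simp add: QS blinfun.add_left blinfun.scaleR_left inner_add_left power2_norm_eq_inner)
          qed
          then show ?thesis unfolding rq Q_def[symmetric] poly_op_mult using iq by (rule op_invertible_comp)
        qed
      qed
    qed
  qed
  then show ?thesis using nz by blast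
qed

lemma poly_op_spectrum:
  fixes S :: "'a::{real_inner,complete_space} \<Rightarrow>\<^sub>L 'a"
  assumes sa: "self_adjoint S" and l: "l \<in> op_spectrum (poly_op q S)"
  shows "\<exists>t\<in>op_spectrum S. poly q t = l"
proof (rule ccontr)
  assume "\<not> ?thesis"
  then have "\<And>t. t \<in> op_spectrum S \<Longrightarrow> poly (q - [:l:]) t \<noteq> 0" by auto
  then have "op_invertible (poly_op (q - [:l:]) S)" by (rule poly_op_invertible[OF sa])
  then show False using l by (simp add: op_spectrum_def poly_op_diff poly_op_const)
qed

lemma poly_op_norm_bound:
  fixes S :: "'a::{real_inner,complete_space} \<Rightarrow>\<^sub>L 'a"
  assumes sa: "self_adjoint S" and beta: "\<beta> \<ge> 0" and b: "\<And>t. t \<in> op_spectrum S \<Longrightarrow> \<bar>poly q t\<bar> \<le> \<beta>"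
  shows "norm (poly_op q S) \<le> \<beta>"
proof (rule spec_norm_bound[OF poly_op_sa[OF sa] beta])
  fix l assume "l \<in> op_spectrum (poly_op q S)"
  then obtain t where "t \<in> op_spectrum S" "poly q t = l" using poly_op_spectrum[OF sa] by blast
  then show "\<bar>l\<bar> \<le> \<beta>" using b by auto
qed

lemma real_polyfun_poly:
  fixes g :: "real \<Rightarrow> real"
  assumes "real_polynomial_function g"
  shows "\<exists>p. \<forall>x. g x = poly p x"
  using assms
proof (induction g rule: real_polynomial_function.induct)
  case (linear f)
  then obtain c where "f = (\<lambda>x. x * c)" using real_bounded_linear by blast
  then show ?case by (intro exI[of _ "[:0, c:]"]) simp
next
  case (const c)
  then show ?case by (intro exI[of _ "[:c:]"]) simp
next
  case (add f g)
  then obtain p q where "\<forall>x. f x = poly p x" "\<forall>x. g x = poly q x" by blast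
  then show ?case by (intro exI[of _ "p + q"]) simp
next
  case (mult f g)
  then obtain p q where "\<forall>x. f x = poly p x" "\<forall>x. g x = poly q x" by blast
  then show ?case by (intro exI[of _ "p * q"]) simp
qed

definition approx :: "(nat \<Rightarrow> real poly) \<Rightarrow> (real \<Rightarrow> real) \<Rightarrow> real set \<Rightarrow> bool" where
  "approx p g K \<longleftrightarrow> (\<forall>e>0. \<forall>\<^sub>F n in sequentially. \<forall>t\<in>K. \<bar>poly (p n) t - g t\<bar> < e)"

lemma approx_exists:
  assumes "compact K" "continuous_on K g"
  shows "\<exists>p. approx p g K"
proof -
  have "\<exists>q. \<forall>t\<in>K. \<bar>poly q t - g t\<bar> < inverse (real (Suc n))" for n
  proof -
    obtain h where h: "real_polynomial_function h" "\<And>x. x \<in> K \<Longrightarrow> \<bar>g x - h x\<bar> < inverse (real (Suc n))"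
      using Stone_Weierstrass_real_polynomial_function[OF assms, of "inverse (real (Suc n))"] by auto
    obtain q where "\<forall>x. h x = poly q x" using real_polyfun_poly[OF h(1)] by blast
    then show ?thesis using h(2) by (intro exI[of _ q]) (auto simp: abs_minus_commute)
  qed
  then obtain p where p: "\<And>n. \<forall>t\<in>K. \<bar>poly (p n) t - g t\<bar> < inverse (real (Suc n))" by metis
  have "approx p g K"
    unfolding approx_def
  proof (intro allI impI)
    fix e :: real assume e: "e > 0"
    obtain N where N: "inverse (real (Suc N)) < e" using reals_Archimedean[OF e] by blast
    show "\<forall>\<^sub>F n in sequentially. \<forall>t\<in>K. \<bar>poly (p n) t - g t\<bar> < e"
      unfolding eventually_sequentially
    proof (intro exI allI impI ballI)
      fix n t assume n: "N \<le> n" and t: "t \<in> K"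
      have "inverse (real (Suc n)) \<le> inverse (real (Suc N))" using n by (simp add: field_simps)
      moreover have "\<bar>poly (p n) t - g t\<bar> < inverse (real (Suc n))" using p[of n] t by blast
      ultimately show "\<bar>poly (p n) t - g t\<bar> < e" using N by linarith
    qed
  qed
  then show ?thesis by blast
qed

lemma approx_mono: "approx p g K \<Longrightarrow> K' \<subseteq> K \<Longrightarrow> approx p g K'"
  unfolding approx_def by (fastforce elim: eventually_mono)

lemma approx_cong: "(\<And>t. t \<in> K \<Longrightarrow> g t = h t) \<Longrightarrow> approx p g K \<longleftrightarrow> approx p h K"
  unfolding approx_def by (intro all_cong1 imp_cong refl eventually_cong always_eventually) auto

lemma approx_const: "approx (\<lambda>n. q) (poly q) K"
  unfolding approx_def by simp

lemma approx_add:
  assumes "approx p g K" "approx q h K"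
  shows "approx (\<lambda>n. p n + q n) (\<lambda>t. g t + h t) K"
  unfolding approx_def
proof (intro allI impI)
  fix e :: real assume e: "e > 0"
  have "\<forall>\<^sub>F n in sequentially. (\<forall>t\<in>K. \<bar>poly (p n) t - g t\<bar> < e/2) \<and> (\<forall>t\<in>K. \<bar>poly (q n) t - h t\<bar> < e/2)"
    by (rule eventually_conj[OF assms(1)[unfolded approx_def, rule_format, OF half_gt_zero[OF e]]
          assms(2)[unfolded approx_def, rule_format, OF half_gt_zero[OF e]]])
  then show "\<forall>\<^sub>F n in sequentially. \<forall>t\<in>K. \<bar>poly (p n + q n) t - (g t + h t)\<bar> < e"
  proof eventually_elim
    case (elim n)
    show ?case
    proof
      fix t assume t: "t \<in> K"
      have 1: "\<bar>poly (p n) t - g t\<bar> < e/2" "\<bar>poly (q n) t - h t\<bar> < e/2" using elim t by auto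
      have "poly (p n + q n) t - (g t + h t) = (poly (p n) t - g t) + (poly (q n) t - h t)" by simp
      then have "\<bar>poly (p n + q n) t - (g t + h t)\<bar> \<le> \<bar>poly (p n) t - g t\<bar> + \<bar>poly (q n) t - h t\<bar>"
        by (simp only: abs_triangle_ineq)
      then show "\<bar>poly (p n + q n) t - (g t + h t)\<bar> < e" using 1 by linarith
    qed
  qed
qed

lemma approx_smult:
  assumes "approx p g K"
  shows "approx (\<lambda>n. smult c (p n)) (\<lambda>t. c * g t) K"
  unfolding approx_def
proof (intro allI impI)
  fix e :: real assume e: "e > 0"
  have ce: "e / (\<bar>c\<bar> + 1) > 0" using e by (simp add: add_pos_nonneg)
  have "\<forall>\<^sub>F n in sequentially. \<forall>t\<in>K. \<bar>poly (p n) t - g t\<bar> < e / (\<bar>c\<bar> + 1)"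
    by (rule assms[unfolded approx_def, rule_format, OF ce])
  then show "\<forall>\<^sub>F n in sequentially. \<forall>t\<in>K. \<bar>poly (smult c (p n)) t - c * g t\<bar> < e"
  proof eventually_elim
    case (elim n)
    show ?case
    proof
      fix t assume t: "t \<in> K"
      have "\<bar>poly (smult c (p n)) t - c * g t\<bar> = \<bar>c\<bar> * \<bar>poly (p n) t - g t\<bar>"
        by (simp add: abs_mult[symmetric] algebra_simps)
      also have "\<dots> \<le> (\<bar>c\<bar> + 1) * \<bar>poly (p n) t - g t\<bar>" by (simp add: mult_right_mono)
      also have "\<dots> < (\<bar>c\<bar> + 1) * (e / (\<bar>c\<bar> + 1))"
        using elim t by (intro mult_strict_left_mono) (auto simp: add_pos_nonneg)
      also have "\<dots> = e" by (simp add: add_pos_nonneg)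
      finally show "\<bar>poly (smult c (p n)) t - c * g t\<bar> < e" .
    qed
  qed
qed

lemma approx_mult:
  assumes p: "approx p g K" and q: "approx q h K"
    and bg: "\<And>t. t \<in> K \<Longrightarrow> \<bar>g t\<bar> \<le> M" and bh: "\<And>t. t \<in> K \<Longrightarrow> \<bar>h t\<bar> \<le> M"
  shows "approx (\<lambda>n. p n * q n) (\<lambda>t. g t * h t) K"
  unfolding approx_def
proof (intro allI impI)
  fix e :: real assume e: "e > 0"
  define M' where "M' = \<bar>M\<bar> + 1"
  have M': "M' > 0" "\<And>t. t \<in> K \<Longrightarrow> \<bar>g t\<bar> \<le> M'" "\<And>t. t \<in> K \<Longrightarrow> \<bar>h t\<bar> \<le> M'"
    using bg bh by (force simp: M'_def)+
  define d where "d = min 1 (e / (2 * M' + 1))"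
  have M2: "2 * M' + 1 > 0" using M' by simp
  have d: "d > 0" "d \<le> 1" using e M2 by (auto simp: d_def)
  have "d \<le> e / (2 * M' + 1)" by (simp add: d_def)
  then have d3: "d * (2 * M' + 1) \<le> e" using M2 by (simp add: pos_le_divide_eq)
  have "\<forall>\<^sub>F n in sequentially. (\<forall>t\<in>K. \<bar>poly (p n) t - g t\<bar> < d) \<and> (\<forall>t\<in>K. \<bar>poly (q n) t - h t\<bar> < d)"
    by (rule eventually_conj[OF p[unfolded approx_def, rule_format, OF d(1)] q[unfolded approx_def, rule_format, OF d(1)]])
  then show "\<forall>\<^sub>F n in sequentially. \<forall>t\<in>K. \<bar>poly (p n * q n) t - g t * h t\<bar> < e"
  proof eventually_elim
    case (elim n)
    show ?case
    proof
      fix t assume t: "t \<in> K"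
      define a where "a = poly (p n) t - g t"
      define b where "b = poly (q n) t - h t"
      have a: "\<bar>a\<bar> < d" and b: "\<bar>b\<bar> < d" using elim t by (auto simp: a_def b_def)
      have "poly (p n * q n) t - g t * h t = a * h t + g t * b + a * b"
        by (simp add: a_def b_def algebra_simps)
      moreover have "\<bar>a * h t + g t * b + a * b\<bar> \<le> \<bar>a * h t\<bar> + \<bar>g t * b\<bar> + \<bar>a * b\<bar>"
        by (rule order_trans[OF abs_triangle_ineq add_mono[OF abs_triangle_ineq order_refl]])
      ultimately have 1: "\<bar>poly (p n * q n) t - g t * h t\<bar> \<le> \<bar>a\<bar> * \<bar>h t\<bar> + \<bar>g t\<bar> * \<bar>b\<bar> + \<bar>a\<bar> * \<bar>b\<bar>"
        by (simp add: abs_mult)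
      have 2: "\<bar>a\<bar> * \<bar>h t\<bar> \<le> d * M'" using a M'(3)[OF t] by (intro mult_mono) auto
      have 3: "\<bar>g t\<bar> * \<bar>b\<bar> \<le> M' * d" using b M'(2)[OF t] by (intro mult_mono) auto
      have "\<bar>a\<bar> * \<bar>b\<bar> \<le> \<bar>a\<bar> * 1" using b d by (intro mult_left_mono) auto
      then have 4: "\<bar>a\<bar> * \<bar>b\<bar> < d" using a by simp
      have "d * M' + M' * d + d = d * (2 * M' + 1)" by (simp add: algebra_simps)
      then show "\<bar>poly (p n * q n) t - g t * h t\<bar> < e" using 1 2 3 4 d3 by linarith
    qed
  qed
qed



subsection \<open>The continuous functional calculus\<close>

lemma cfc_approx_def:
  "cfc f A = (THE T. \<forall>p. approx p f (op_spectrum A) \<longrightarrow> (\<lambda>n. poly_op (p n) A) \<longlonglongrightarrow> T)"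
  by (simp add: cfc_def approx_def)

lemma cfc_cong:
  assumes "\<And>t. t \<in> op_spectrum S \<Longrightarrow> g t = h t"
  shows "cfc g S = cfc h S"
  unfolding cfc_approx_def using approx_cong[OF assms] by simp

lemma abs_tri_aux: "\<bar>x - g\<bar> < a \<Longrightarrow> \<bar>y - g\<bar> < b \<Longrightarrow> \<bar>x - y\<bar> \<le> a + (b::real)"
  by arith

context
  fixes S :: "'a::{real_inner,complete_space} \<Rightarrow>\<^sub>L 'a"
  assumes sa: "self_adjoint S"
begin

lemma approx_diff_bound:
  assumes p: "approx p g (op_spectrum S)" and q: "approx q g (op_spectrum S)" and e: "e > 0"
  shows "\<forall>\<^sub>F n in sequentially. norm (poly_op (p n) S - poly_op (q n) S) \<le> e"
proof -
  have "\<forall>\<^sub>F n in sequentially. (\<forall>t\<in>op_spectrum S. \<bar>poly (p n) t - g t\<bar> < e/2) \<and> (\<forall>t\<in>op_spectrum S. \<bar>poly (q n) t - g t\<bar> < e/2)"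
    by (rule eventually_conj[OF p[unfolded approx_def, rule_format, OF half_gt_zero[OF e]]
          q[unfolded approx_def, rule_format, OF half_gt_zero[OF e]]])
  then show ?thesis
  proof eventually_elim
    case (elim n)
    have "norm (poly_op (p n - q n) S) \<le> e"
    proof (rule poly_op_norm_bound[OF sa])
      show "0 \<le> e" using e by simp
      fix t assume t: "t \<in> op_spectrum S"
      have "\<bar>poly (p n) t - g t\<bar> < e/2" "\<bar>poly (q n) t - g t\<bar> < e/2" using elim t by auto
      from abs_tri_aux[OF this] show "\<bar>poly (p n - q n) t\<bar> \<le> e" by simp
    qed
    then show ?case by (simp add: poly_op_diff)
  qed
qed

lemma cfc_exists:
  assumes g: "continuous_on (op_spectrum S) g"
  shows "\<exists>T. \<forall>p. approx p g (op_spectrum S) \<longrightarrow> (\<lambda>n. poly_op (p n) S) \<longlonglongrightarrow> T"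
proof -
  obtain p0 where p0: "approx p0 g (op_spectrum S)"
    using approx_exists[OF spectrum_compact g] by blast
  have "Cauchy (\<lambda>n. poly_op (p0 n) S)"
  proof (rule metric_CauchyI)
    fix e :: real assume e: "e > 0"
    obtain N where N: "\<And>n. n \<ge> N \<Longrightarrow> \<forall>t\<in>op_spectrum S. \<bar>poly (p0 n) t - g t\<bar> < e/3"
      using p0[unfolded approx_def, rule_format, of "e/3"] e unfolding eventually_sequentially by auto
    show "\<exists>M. \<forall>m\<ge>M. \<forall>n\<ge>M. dist (poly_op (p0 m) S) (poly_op (p0 n) S) < e"
    proof (intro exI allI impI)
      fix m n assume m: "m \<ge> N" and n: "n \<ge> N"
      have "norm (poly_op (p0 m - p0 n) S) \<le> 2 * e / 3"
      proof (rule poly_op_norm_bound[OF sa])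
        show "0 \<le> 2 * e / 3" using e by simp
        fix t assume t: "t \<in> op_spectrum S"
        have "\<bar>poly (p0 m) t - g t\<bar> < e/3" "\<bar>poly (p0 n) t - g t\<bar> < e/3" using N[OF m] N[OF n] t by auto
        from abs_tri_aux[OF this] show "\<bar>poly (p0 m - p0 n) t\<bar> \<le> 2 * e / 3" by simp
      qed
      then show "dist (poly_op (p0 m) S) (poly_op (p0 n) S) < e"
        using e by (simp add: dist_norm poly_op_diff)
    qed
  qed
  then obtain T where T: "(\<lambda>n. poly_op (p0 n) S) \<longlonglongrightarrow> T"
    using blinfun_Cauchy_convergent convergent_def by blast
  have "(\<lambda>n. poly_op (p n) S) \<longlonglongrightarrow> T" if p: "approx p g (op_spectrum S)" for p
  proof -
    have "(\<lambda>n. poly_op (p n) S - poly_op (p0 n) S) \<longlonglongrightarrow> 0"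
    proof (rule tendstoI)
      fix e :: real assume e: "e > 0"
      have "\<forall>\<^sub>F n in sequentially. norm (poly_op (p n) S - poly_op (p0 n) S) \<le> e/2"
        by (rule approx_diff_bound[OF p p0]) (use e in simp)
      then show "\<forall>\<^sub>F n in sequentially. dist (poly_op (p n) S - poly_op (p0 n) S) 0 < e"
        by eventually_elim (use e in simp)
    qed
    from tendsto_add[OF this T] show ?thesis by simp
  qed
  then show ?thesis by blast
qed

lemma cfc_tendsto:
  assumes g: "continuous_on (op_spectrum S) g" and p: "approx p g (op_spectrum S)"
  shows "(\<lambda>n. poly_op (p n) S) \<longlonglongrightarrow> cfc g S"
proof -
  obtain T where T: "\<forall>p. approx p g (op_spectrum S) \<longrightarrow> (\<lambda>n. poly_op (p n) S) \<longlonglongrightarrow> T"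
    using cfc_exists[OF g] by blast
  obtain p0 where p0: "approx p0 g (op_spectrum S)"
    using approx_exists[OF spectrum_compact g] by blast
  have "cfc g S = T"
    unfolding cfc_approx_def
  proof (rule the_equality)
    show "\<forall>p. approx p g (op_spectrum S) \<longrightarrow> (\<lambda>n. poly_op (p n) S) \<longlonglongrightarrow> T" by (rule T)
    fix T' assume "\<forall>p. approx p g (op_spectrum S) \<longrightarrow> (\<lambda>n. poly_op (p n) S) \<longlonglongrightarrow> T'"
    then have "(\<lambda>n. poly_op (p0 n) S) \<longlonglongrightarrow> T'" using p0 by blast
    moreover have "(\<lambda>n. poly_op (p0 n) S) \<longlonglongrightarrow> T" using p0 T by blast
    ultimately show "T' = T" by (rule LIMSEQ_unique)
  qed
  then show ?thesis using T p by blast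
qed

lemma cfc_unique:
  assumes g: "continuous_on (op_spectrum S) g" and p: "approx p g (op_spectrum S)"
    and T: "(\<lambda>n. poly_op (p n) S) \<longlonglongrightarrow> T"
  shows "cfc g S = T"
  using LIMSEQ_unique[OF cfc_tendsto[OF g p] T] .

lemma cfc_poly: "cfc (poly q) S = poly_op q S"
  by (rule cfc_unique[OF _ approx_const]) (auto intro: continuous_intros)

lemma cfc_const: "cfc (\<lambda>t. c) S = c *\<^sub>R id_blinfun"
proof -
  have "poly [:c:] = (\<lambda>t::real. c)" by (auto simp: fun_eq_iff)
  then show ?thesis using cfc_poly[of "[:c:]"] by (simp add: poly_op_const)
qed

lemma cfc_ident: "cfc (\<lambda>t. t) S = S"
proof -
  have "poly [:0, 1:] = (\<lambda>t::real. t)" by (auto simp: fun_eq_iff)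
  then show ?thesis using cfc_poly[of "[:0,1:]"] by (simp add: poly_op_X)
qed

lemma cfc_add:
  assumes g: "continuous_on (op_spectrum S) g" and h: "continuous_on (op_spectrum S) h"
  shows "cfc (\<lambda>t. g t + h t) S = cfc g S + cfc h S"
proof -
  obtain p where p: "approx p g (op_spectrum S)" using approx_exists[OF spectrum_compact g] by blast
  obtain q where q: "approx q h (op_spectrum S)" using approx_exists[OF spectrum_compact h] by blast
  show ?thesis
  proof (rule cfc_unique[OF _ approx_add[OF p q]])
    show "continuous_on (op_spectrum S) (\<lambda>t. g t + h t)" by (intro continuous_intros g h)
    show "(\<lambda>n. poly_op (p n + q n) S) \<longlonglongrightarrow> cfc g S + cfc h S"
      unfolding poly_op_add by (intro tendsto_add cfc_tendsto g h p q)
  qed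
qed

lemma cfc_scale:
  assumes g: "continuous_on (op_spectrum S) g"
  shows "cfc (\<lambda>t. c * g t) S = c *\<^sub>R cfc g S"
proof -
  obtain p where p: "approx p g (op_spectrum S)" using approx_exists[OF spectrum_compact g] by blast
  show ?thesis
  proof (rule cfc_unique[OF _ approx_smult[OF p]])
    show "continuous_on (op_spectrum S) (\<lambda>t. c * g t)" by (intro continuous_intros g)
    show "(\<lambda>n. poly_op (smult c (p n)) S) \<longlonglongrightarrow> c *\<^sub>R cfc g S"
      unfolding poly_op_smult by (intro tendsto_scaleR tendsto_const cfc_tendsto g p)
  qed
qed

lemma cfc_diff:
  assumes g: "continuous_on (op_spectrum S) g" and h: "continuous_on (op_spectrum S) h"
  shows "cfc (\<lambda>t. g t - h t) S = cfc g S - cfc h S"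
proof -
  have h': "continuous_on (op_spectrum S) (\<lambda>t. (-1) * h t)" by (intro continuous_intros h)
  have "cfc (\<lambda>t. g t - h t) S = cfc (\<lambda>t. g t + (-1) * h t) S" by simp
  also have "\<dots> = cfc g S + cfc (\<lambda>t. (-1) * h t) S" by (rule cfc_add[OF g h'])
  also have "\<dots> = cfc g S - cfc h S" using cfc_scale[OF h, of "-1"] by simp
  finally show ?thesis .
qed

lemma cfc_mult:
  assumes g: "continuous_on (op_spectrum S) g" and h: "continuous_on (op_spectrum S) h"
  shows "cfc (\<lambda>t. g t * h t) S = cfc g S o\<^sub>L cfc h S"
proof -
  obtain p where p: "approx p g (op_spectrum S)" using approx_exists[OF spectrum_compact g] by blast
  obtain q where q: "approx q h (op_spectrum S)" using approx_exists[OF spectrum_compact h] by blast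
  have "compact (g ` op_spectrum S)" "compact (h ` op_spectrum S)"
    using compact_continuous_image[OF g spectrum_compact] compact_continuous_image[OF h spectrum_compact] .
  then obtain Mg Mh where Mg: "\<And>t. t \<in> op_spectrum S \<Longrightarrow> \<bar>g t\<bar> \<le> Mg" and Mh: "\<And>t. t \<in> op_spectrum S \<Longrightarrow> \<bar>h t\<bar> \<le> Mh"
    by (metis compact_imp_bounded bounded_real imageI)
  have Mg': "\<And>t. t \<in> op_spectrum S \<Longrightarrow> \<bar>g t\<bar> \<le> max Mg Mh" and Mh': "\<And>t. t \<in> op_spectrum S \<Longrightarrow> \<bar>h t\<bar> \<le> max Mg Mh"
    using Mg Mh by (meson max.cobounded1 max.cobounded2 order_trans)+
  show ?thesis
  proof (rule cfc_unique[OF _ approx_mult[OF p q Mg' Mh']])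
    show "continuous_on (op_spectrum S) (\<lambda>t. g t * h t)" by (intro continuous_intros g h)
    show "(\<lambda>n. poly_op (p n * q n) S) \<longlonglongrightarrow> (cfc g S o\<^sub>L cfc h S)"
      unfolding poly_op_mult
      by (rule bounded_bilinear.tendsto[OF bounded_bilinear_blinfun_compose cfc_tendsto[OF g p] cfc_tendsto[OF h q]])
  qed
qed

lemma cfc_commute:
  assumes g: "continuous_on (op_spectrum S) g" and h: "continuous_on (op_spectrum S) h"
  shows "cfc g S o\<^sub>L cfc h S = cfc h S o\<^sub>L cfc g S"
  using cfc_mult[OF g h] cfc_mult[OF h g] by (simp add: mult.commute)

lemma cfc_sa:
  assumes g: "continuous_on (op_spectrum S) g"
  shows "self_adjoint (cfc g S)"
proof -
  obtain p where p: "approx p g (op_spectrum S)" using approx_exists[OF spectrum_compact g] by blast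
  show ?thesis by (rule sa_limit[OF cfc_tendsto[OF g p]]) (simp_all add: poly_op_sa[OF sa])
qed

lemma cfc_norm_bound:
  assumes g: "continuous_on (op_spectrum S) g" and beta: "\<beta> \<ge> 0"
    and b: "\<And>t. t \<in> op_spectrum S \<Longrightarrow> \<bar>g t\<bar> \<le> \<beta>"
  shows "norm (cfc g S) \<le> \<beta>"
proof (rule field_le_epsilon)
  fix e :: real assume e: "e > 0"
  obtain p where p: "approx p g (op_spectrum S)" using approx_exists[OF spectrum_compact g] by blast
  have ev: "\<forall>\<^sub>F n in sequentially. norm (poly_op (p n) S) \<le> \<beta> + e"
    using p[unfolded approx_def, rule_format, OF e]
  proof eventually_elim
    case (elim n)
    show ?case
    proof (rule poly_op_norm_bound[OF sa])
      show "0 \<le> \<beta> + e" using beta e by simp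
      fix t assume t: "t \<in> op_spectrum S"
      have "\<bar>poly (p n) t - g t\<bar> < e" using elim t by auto
      then show "\<bar>poly (p n) t\<bar> \<le> \<beta> + e" using b[OF t] by linarith
    qed
  qed
  show "norm (cfc g S) \<le> \<beta> + e"
    by (rule tendsto_upperbound[OF tendsto_norm[OF cfc_tendsto[OF g p]] ev]) simp
qed

lemma cfc_spectrum:
  assumes g: "continuous_on (op_spectrum S) g"
  shows "op_spectrum (cfc g S) \<subseteq> g ` op_spectrum S"
proof
  fix mu assume mu: "mu \<in> op_spectrum (cfc g S)"
  show "mu \<in> g ` op_spectrum S"
  proof (rule ccontr)
    assume nm: "mu \<notin> g ` op_spectrum S"
    then have nz: "\<And>t. t \<in> op_spectrum S \<Longrightarrow> g t - mu \<noteq> 0" by force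
    have gm: "continuous_on (op_spectrum S) (\<lambda>t. g t - mu)" by (intro continuous_intros g)
    have hc: "continuous_on (op_spectrum S) (\<lambda>t. 1 / (g t - mu))"
      by (intro continuous_intros g) (use nz in auto)
    have 1: "cfc (\<lambda>t. 1 / (g t - mu)) S o\<^sub>L cfc (\<lambda>t. g t - mu) S = id_blinfun"
    proof -
      have "cfc (\<lambda>t. 1 / (g t - mu)) S o\<^sub>L cfc (\<lambda>t. g t - mu) S = cfc (\<lambda>t. 1 / (g t - mu) * (g t - mu)) S"
        by (rule cfc_mult[OF hc gm, symmetric])
      also have "\<dots> = cfc (\<lambda>t. 1) S" by (rule cfc_cong) (use nz in auto)
      finally show ?thesis by (simp add: cfc_const)
    qed
    have 2: "cfc (\<lambda>t. g t - mu) S o\<^sub>L cfc (\<lambda>t. 1 / (g t - mu)) S = id_blinfun"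
      using 1 cfc_commute[OF hc gm] by simp
    have "cfc (\<lambda>t. g t - mu) S = cfc g S - mu *\<^sub>R id_blinfun"
      using cfc_diff[OF g continuous_on_const] by (simp add: cfc_const)
    then have "op_invertible (cfc g S - mu *\<^sub>R id_blinfun)"
      using 1 2 unfolding op_invertible_def by metis
    then show False using mu by (simp add: op_spectrum_def)
  qed
qed

end



lemma cfc_zero_fun:
  fixes S :: "'a::{real_inner,complete_space} \<Rightarrow>\<^sub>L 'a"
  assumes sa: "self_adjoint S"
  shows "cfc (\<lambda>t. 0) S = 0"
  using cfc_const[OF sa, of 0] by simp

lemma poly_op_cfc:
  fixes S :: "'a::{real_inner,complete_space} \<Rightarrow>\<^sub>L 'a"
  assumes sa: "self_adjoint S" and g: "continuous_on (op_spectrum S) g"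
  shows "poly_op q (cfc g S) = cfc (\<lambda>t. poly q (g t)) S"
proof (induction q)
  case 0
  then show ?case using cfc_zero_fun[OF sa] by simp
next
  case (pCons a q)
  have c1: "continuous_on (op_spectrum S) (\<lambda>t. poly q (g t))" by (intro continuous_intros g)
  have c2: "continuous_on (op_spectrum S) (\<lambda>t. g t * poly q (g t))" by (intro continuous_intros g)
  have "poly_op (pCons a q) (cfc g S) = a *\<^sub>R id_blinfun + (cfc g S o\<^sub>L cfc (\<lambda>t. poly q (g t)) S)"
    by (simp add: poly_op_pCons pCons.IH)
  also have "\<dots> = cfc (\<lambda>t. a) S + cfc (\<lambda>t. g t * poly q (g t)) S"
    by (simp add: cfc_const[OF sa] cfc_mult[OF sa g c1])
  also have "\<dots> = cfc (\<lambda>t. a + g t * poly q (g t)) S"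
    by (rule cfc_add[OF sa continuous_on_const c2, symmetric])
  finally show ?case by simp
qed

lemma cfc_compose:
  fixes S :: "'a::{real_inner,complete_space} \<Rightarrow>\<^sub>L 'a"
  assumes sa: "self_adjoint S" and g: "continuous_on (op_spectrum S) g"
    and h: "continuous_on (g ` op_spectrum S) h"
  shows "cfc h (cfc g S) = cfc (\<lambda>t. h (g t)) S"
proof -
  define T where "T = cfc g S"
  have saT: "self_adjoint T" unfolding T_def by (rule cfc_sa[OF sa g])
  have sub: "op_spectrum T \<subseteq> g ` op_spectrum S" unfolding T_def by (rule cfc_spectrum[OF sa g])
  have K: "compact (g ` op_spectrum S)" by (rule compact_continuous_image[OF g spectrum_compact])
  obtain q where q: "approx q h (g ` op_spectrum S)" using approx_exists[OF K h] by blast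
  have hT: "continuous_on (op_spectrum T) h" using h sub continuous_on_subset by blast
  have lim1: "(\<lambda>n. poly_op (q n) T) \<longlonglongrightarrow> cfc h T"
    by (rule cfc_tendsto[OF saT hT approx_mono[OF q sub]])
  have hg: "continuous_on (op_spectrum S) (\<lambda>t. h (g t))"
    using continuous_on_compose[OF g h] by (simp add: o_def)
  have lim2: "(\<lambda>n. poly_op (q n) T) \<longlonglongrightarrow> cfc (\<lambda>t. h (g t)) S"
  proof -
    have eq: "poly_op (q n) T = cfc (\<lambda>t. poly (q n) (g t)) S" for n
      unfolding T_def by (rule poly_op_cfc[OF sa g])
    have "(\<lambda>n. cfc (\<lambda>t. poly (q n) (g t)) S - cfc (\<lambda>t. h (g t)) S) \<longlonglongrightarrow> 0"
    proof (rule tendstoI)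
      fix e :: real assume e: "e > 0"
      show "\<forall>\<^sub>F n in sequentially. dist (cfc (\<lambda>t. poly (q n) (g t)) S - cfc (\<lambda>t. h (g t)) S) 0 < e"
        using q[unfolded approx_def, rule_format, OF half_gt_zero[OF e]]
      proof eventually_elim
        case (elim n)
        have c: "continuous_on (op_spectrum S) (\<lambda>t. poly (q n) (g t))" by (intro continuous_intros g)
        have "norm (cfc (\<lambda>t. poly (q n) (g t) - h (g t)) S) \<le> e/2"
        proof (rule cfc_norm_bound[OF sa])
          show "continuous_on (op_spectrum S) (\<lambda>t. poly (q n) (g t) - h (g t))" by (intro continuous_intros c hg)
          show "0 \<le> e/2" using e by simp
          fix t assume "t \<in> op_spectrum S"
          then show "\<bar>poly (q n) (g t) - h (g t)\<bar> \<le> e/2" using elim by fastforce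
        qed
        then show ?case using e by (simp add: dist_norm cfc_diff[OF sa c hg])
      qed
    qed
    from tendsto_add[OF this tendsto_const[of "cfc (\<lambda>t. h (g t)) S"]] show ?thesis
      by (simp add: eq)
  qed
  show ?thesis using LIMSEQ_unique[OF lim1 lim2] by (simp add: T_def)
qed

lemma poly_op_tendsto:
  fixes X :: "'b \<Rightarrow> ('a::real_normed_vector \<Rightarrow>\<^sub>L 'a)"
  assumes "(X \<longlongrightarrow> S) F"
  shows "((\<lambda>n. poly_op q (X n)) \<longlongrightarrow> poly_op q S) F"
proof (induction q)
  case 0 then show ?case by simp
next
  case (pCons a q)
  show ?case unfolding poly_op_pCons
    by (intro tendsto_add tendsto_const bounded_bilinear.tendsto[OF bounded_bilinear_blinfun_compose assms pCons.IH])
qed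

lemma spectrum_in_ball:
  fixes T :: "'a::{real_inner,complete_space} \<Rightarrow>\<^sub>L 'a"
  shows "op_spectrum T \<subseteq> cball 0 (norm T)"
  using spectrum_bounded by (auto simp: dist_real_def)

lemma cfc_continuous_op:
  fixes X :: "'b \<Rightarrow> ('a::{real_inner,complete_space} \<Rightarrow>\<^sub>L 'a)"
  assumes g: "continuous_on UNIV g" and lim: "(X \<longlongrightarrow> S) F" and sa: "self_adjoint S"
    and saX: "\<forall>\<^sub>F n in F. self_adjoint (X n)"
  shows "((\<lambda>n. cfc g (X n)) \<longlongrightarrow> cfc g S) F"
proof (rule tendstoI)
  fix e :: real assume e: "e > 0"
  define R where "R = norm S + 1"
  have evR: "\<forall>\<^sub>F n in F. norm (X n) < R"
    using tendsto_norm[OF lim] unfolding R_def by (rule order_tendstoD) simp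
  have gR: "continuous_on (cball 0 R) g" using g continuous_on_subset by blast
  obtain p where p: "approx p g (cball 0 R)" using approx_exists[OF compact_cball gR] by blast
  obtain n0 where n0: "\<forall>t\<in>cball 0 R. \<bar>poly (p n0) t - g t\<bar> < e/3"
    using eventually_happens'[OF sequentially_bot p[unfolded approx_def, rule_format, of "e/3"]] e by auto
  define q where "q = p n0"
  have close: "norm (cfc g T - poly_op q T) \<le> e/3" if saT: "self_adjoint T" and nT: "norm T \<le> R"
    for T :: "'a \<Rightarrow>\<^sub>L 'a"
  proof -
    have gT: "continuous_on (op_spectrum T) g" using g continuous_on_subset by blast
    have pT: "continuous_on (op_spectrum T) (poly q)" by (intro continuous_intros)
    have "cfc g T - poly_op q T = cfc (\<lambda>t. g t - poly q t) T"
      using cfc_diff[OF saT gT pT] cfc_poly[OF saT, of q] by simp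
    also have "norm \<dots> \<le> e/3"
    proof (rule cfc_norm_bound[OF saT])
      show "continuous_on (op_spectrum T) (\<lambda>t. g t - poly q t)" by (intro continuous_intros gT)
      show "0 \<le> e/3" using e by simp
      fix t assume "t \<in> op_spectrum T"
      then have "t \<in> cball 0 R" using spectrum_in_ball[of T] nT by (auto simp: dist_real_def)
      then show "\<bar>g t - poly q t\<bar> \<le> e/3" using n0 by (force simp: q_def abs_minus_commute)
    qed
    finally show ?thesis .
  qed
  have cS: "norm (cfc g S - poly_op q S) \<le> e/3" by (rule close[OF sa]) (simp add: R_def)
  have evq: "\<forall>\<^sub>F n in F. dist (poly_op q (X n)) (poly_op q S) < e/3"
    by (rule tendstoD[OF poly_op_tendsto[OF lim, of q]]) (use e in simp)
  show "\<forall>\<^sub>F n in F. dist (cfc g (X n)) (cfc g S) < e"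
    using evR saX evq
  proof eventually_elim
    case (elim n)
    have cX: "norm (cfc g (X n) - poly_op q (X n)) \<le> e/3" using close[OF elim(2)] elim(1) by simp
    define u where "u = cfc g (X n) - poly_op q (X n)"
    define v where "v = poly_op q (X n) - poly_op q S"
    define w where "w = cfc g S - poly_op q S"
    have "cfc g (X n) - cfc g S = u + v - w" by (simp add: u_def v_def w_def)
    moreover have "norm (u + v - w) \<le> norm u + norm v + norm w"
      using norm_triangle_ineq4[of "u+v" w] norm_triangle_ineq[of u v] by linarith
    ultimately have "dist (cfc g (X n)) (cfc g S) \<le> norm (cfc g (X n) - poly_op q (X n)) + dist (poly_op q (X n)) (poly_op q S) + norm (cfc g S - poly_op q S)"
      by (simp add: dist_norm u_def v_def w_def)
    then show ?case using cX cS elim(3) by linarith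
  qed
qed



lemma pos_inv_spectrum:
  fixes A :: "'a::{real_inner,complete_space} \<Rightarrow>\<^sub>L 'a"
  assumes pos: "positive_op A" and inv: "op_invertible A"
  shows "op_spectrum A \<subseteq> {0<..}"
proof
  fix l assume l: "l \<in> op_spectrum A"
  show "l \<in> {0<..}"
  proof (rule ccontr)
    assume "l \<notin> {0<..}"
    then have "l \<le> 0" by simp
    show False
    proof (cases "l = 0")
      case True
      then show False using l inv by (simp add: op_spectrum_def)
    next
      case False
      then have ln: "l < 0" using \<open>l \<le> 0\<close> by simp
      have "op_invertible (A - l *\<^sub>R id_blinfun)"
      proof (rule coercive_invertible)
        show "self_adjoint (A - l *\<^sub>R id_blinfun)"
          using pos by (intro sa_diff sa_scale sa_id) (simp add: positive_op_def)
        show "0 < - l" using ln by simp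
        fix x
        have "A x \<bullet> x \<ge> 0" using pos by (simp add: positive_op_def)
        then show "- l * (norm x)\<^sup>2 \<le> (A - l *\<^sub>R id_blinfun) x \<bullet> x"
          by (simp add: blinfun.diff_left blinfun.scaleR_left inner_diff_left power2_norm_eq_inner)
      qed
      then show False using l by (simp add: op_spectrum_def)
    qed
  qed
qed

lemma spectrum_near_one:
  fixes T :: "'a::{real_normed_vector,complete_space} \<Rightarrow>\<^sub>L 'a"
  assumes "l \<in> op_spectrum T"
  shows "\<bar>l - 1\<bar> \<le> norm (T - id_blinfun)"
proof (rule spectrum_bounded)
  have eq: "(T - id_blinfun) - (l - 1) *\<^sub>R id_blinfun = T - l *\<^sub>R id_blinfun" by (simp add: algebra_simps)
  show "l - 1 \<in> op_spectrum (T - id_blinfun)" using assms unfolding op_spectrum_def mem_Collect_eq eq .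
qed

lemma exp_quad:
  fixes u :: real
  assumes u: "\<bar>u\<bar> \<le> 1/2"
  shows "\<bar>exp u - 1 - u\<bar> \<le> 2 * u\<^sup>2"
proof -
  have lo: "exp u - 1 - u \<ge> 0" using exp_ge_add_one_self[of u] by linarith
  have "1 - u \<le> exp (- u)" using exp_ge_add_one_self[of "-u"] by simp
  moreover have pu: "1 - u > 0" using u by simp
  ultimately have "exp u * (1 - u) \<le> exp u * exp (- u)" by (intro mult_left_mono) auto
  then have "exp u * (1 - u) \<le> 1" by (simp add: exp_minus)
  then have "exp u \<le> 1 / (1 - u)" using pu by (simp add: pos_le_divide_eq)
  also have "1 / (1 - u) = 1 + u + u\<^sup>2 / (1 - u)" using pu by (simp add: field_simps power2_eq_square)
  also have "u\<^sup>2 / (1 - u) \<le> u\<^sup>2 / (1/2)" using u pu by (intro divide_left_mono) auto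
  finally have "exp u - 1 - u \<le> 2 * u\<^sup>2" by simp
  then show ?thesis using lo by simp
qed

lemma ln_quad:
  fixes t :: real
  assumes "\<bar>t - 1\<bar> \<le> 1/2"
  shows "\<bar>ln t - (t - 1)\<bar> \<le> 2 * (t - 1)\<^sup>2"
  using abs_ln_one_plus_x_minus_x_bound[of "t - 1"] assms by simp

lemma deriv_est:
  assumes d: "(f has_real_derivative D) (at 1)" and f1: "f 1 = 1" and e: "e > 0"
  shows "\<exists>\<delta>>0. \<forall>t. \<bar>t - 1\<bar> < \<delta> \<longrightarrow> \<bar>f t - 1 - D * (t - 1)\<bar> \<le> e * \<bar>t - 1\<bar>"
proof -
  have "((\<lambda>y. (f y - f 1) / (y - 1)) \<longlongrightarrow> D) (at 1)"
    using d by (simp add: has_field_derivative_iff)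
  then have "\<forall>\<^sub>F y in at 1. dist ((f y - f 1) / (y - 1)) D < e" using e by (rule tendstoD)
  then obtain \<delta> where \<delta>: "\<delta> > 0" "\<And>y. y \<noteq> 1 \<Longrightarrow> dist y 1 < \<delta> \<Longrightarrow> dist ((f y - f 1) / (y - 1)) D < e"
    unfolding eventually_at by blast
  show ?thesis
  proof (intro exI conjI allI impI)
    show "\<delta> > 0" by (rule \<delta>(1))
    fix t assume t: "\<bar>t - 1\<bar> < \<delta>"
    show "\<bar>f t - 1 - D * (t - 1)\<bar> \<le> e * \<bar>t - 1\<bar>"
    proof (cases "t = 1")
      case True then show ?thesis using f1 by simp
    next
      case False
      then have tn: "t - 1 \<noteq> 0" by simp
      have "\<bar>(f t - 1) / (t - 1) - D\<bar> < e" using \<delta>(2)[of t] t False f1 by (simp add: dist_real_def)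
      moreover have "f t - 1 - D * (t - 1) = ((f t - 1) / (t - 1) - D) * (t - 1)"
        using tn by (simp add: field_simps)
      ultimately show ?thesis by (simp add: abs_mult mult_right_mono)
    qed
  qed
qed

lemma tendsto_from_deriv:
  fixes F :: "real \<Rightarrow> 'b::real_normed_vector"
  assumes "((\<lambda>p. inverse p *\<^sub>R (F p - L0)) \<longlongrightarrow> D) (at 0)"
  shows "(F \<longlongrightarrow> L0) (at 0)"
proof -
  have "((\<lambda>p. p *\<^sub>R (inverse p *\<^sub>R (F p - L0)) + L0) \<longlongrightarrow> 0 *\<^sub>R D + L0) (at 0)"
    by (intro tendsto_intros assms)
  moreover have "\<forall>\<^sub>F p in at (0::real). p *\<^sub>R (inverse p *\<^sub>R (F p - L0)) + L0 = F p"
    by (auto simp: eventually_at_filter)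
  ultimately show ?thesis by (simp add: tendsto_cong)
qed

context
  fixes S :: "'a::{real_inner,complete_space} \<Rightarrow>\<^sub>L 'a"
  assumes sa: "self_adjoint S" and sp: "op_spectrum S \<subseteq> {0<..}"
begin

lemma pos_cont_ln: "continuous_on (op_spectrum S) ln"
  using sp by (intro continuous_intros) auto

lemma pos_cont_powr: "continuous_on (op_spectrum S) (\<lambda>t. t powr q)"
  using sp by (intro continuous_intros) auto

lemma powr_expansion:
  obtains \<Lambda> where "\<Lambda> > 0" "\<And>q. \<bar>q\<bar> * \<Lambda> \<le> 1/2 \<Longrightarrow>
      norm (cfc (\<lambda>t. t powr q) S - id_blinfun - q *\<^sub>R cfc ln S) \<le> 2 * q\<^sup>2 * \<Lambda>\<^sup>2"
proof -
  have "compact (ln ` op_spectrum S)" by (rule compact_continuous_image[OF pos_cont_ln spectrum_compact])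
  then obtain M where M: "\<And>t. t \<in> op_spectrum S \<Longrightarrow> \<bar>ln t\<bar> \<le> M"
    by (metis compact_imp_bounded bounded_real imageI)
  define \<Lambda> where "\<Lambda> = \<bar>M\<bar> + 1"
  have L: "\<Lambda> > 0" "\<And>t. t \<in> op_spectrum S \<Longrightarrow> \<bar>ln t\<bar> \<le> \<Lambda>" using M by (force simp: \<Lambda>_def)+
  show ?thesis
  proof (rule that[OF L(1)])
    fix q :: real assume q: "\<bar>q\<bar> * \<Lambda> \<le> 1/2"
    have c1: "continuous_on (op_spectrum S) (\<lambda>t. t powr q - 1)" by (intro continuous_intros pos_cont_powr)
    have c2: "continuous_on (op_spectrum S) (\<lambda>t. q * ln t)" by (intro continuous_intros pos_cont_ln)
    have "cfc (\<lambda>t. t powr q - 1 - q * ln t) S = cfc (\<lambda>t. t powr q - 1) S - cfc (\<lambda>t. q * ln t) S"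
      by (rule cfc_diff[OF sa c1 c2])
    also have "\<dots> = cfc (\<lambda>t. t powr q) S - id_blinfun - q *\<^sub>R cfc ln S"
      using cfc_diff[OF sa pos_cont_powr continuous_on_const, of q 1] cfc_scale[OF sa pos_cont_ln, of q]
      by (simp add: cfc_const[OF sa])
    finally have eq: "cfc (\<lambda>t. t powr q) S - id_blinfun - q *\<^sub>R cfc ln S = cfc (\<lambda>t. t powr q - 1 - q * ln t) S" ..
    show "norm (cfc (\<lambda>t. t powr q) S - id_blinfun - q *\<^sub>R cfc ln S) \<le> 2 * q\<^sup>2 * \<Lambda>\<^sup>2"
      unfolding eq
    proof (rule cfc_norm_bound[OF sa])
      show "continuous_on (op_spectrum S) (\<lambda>t. t powr q - 1 - q * ln t)" by (intro continuous_intros c1 c2)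
      show "0 \<le> 2 * q\<^sup>2 * \<Lambda>\<^sup>2" by simp
      fix t assume t: "t \<in> op_spectrum S"
      then have tp: "t > 0" using sp by auto
      have u: "\<bar>q * ln t\<bar> \<le> \<bar>q\<bar> * \<Lambda>" using L(2)[OF t] by (simp add: abs_mult mult_left_mono)
      then have u2: "\<bar>q * ln t\<bar> \<le> 1/2" using q by simp
      have "t powr q = exp (q * ln t)" using tp by (simp add: powr_def mult.commute)
      then have "\<bar>t powr q - 1 - q * ln t\<bar> \<le> 2 * (q * ln t)\<^sup>2" using exp_quad[OF u2] by simp
      also have "(q * ln t)\<^sup>2 \<le> (\<bar>q\<bar> * \<Lambda>)\<^sup>2"
        using u by (metis abs_ge_zero power2_abs power_mono)
      finally show "\<bar>t powr q - 1 - q * ln t\<bar> \<le> 2 * q\<^sup>2 * \<Lambda>\<^sup>2" by (simp add: power_mult_distrib)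
    qed
  qed
qed

lemma powr_deriv_lim:
  "((\<lambda>p. inverse p *\<^sub>R (cfc (\<lambda>t. t powr (c * p)) S - id_blinfun)) \<longlongrightarrow> c *\<^sub>R cfc ln S) (at 0)"
proof (rule tendstoI)
  fix e :: real assume e: "e > 0"
  obtain \<Lambda> where L: "\<Lambda> > 0" "\<And>q. \<bar>q\<bar> * \<Lambda> \<le> 1/2 \<Longrightarrow>
      norm (cfc (\<lambda>t. t powr q) S - id_blinfun - q *\<^sub>R cfc ln S) \<le> 2 * q\<^sup>2 * \<Lambda>\<^sup>2"
    using powr_expansion by blast
  define d where "d = min (1 / (2 * (\<bar>c\<bar> + 1) * \<Lambda>)) (e / (2 * (c\<^sup>2 + 1) * \<Lambda>\<^sup>2 + 1))"
  have "2 * (c\<^sup>2 + 1) * \<Lambda>\<^sup>2 \<ge> 0" by simp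
  then have pos1: "2 * (c\<^sup>2 + 1) * \<Lambda>\<^sup>2 + 1 > 0" by linarith
  have pos2: "2 * (\<bar>c\<bar> + 1) * \<Lambda> > 0" using L by (simp add: add_pos_nonneg)
  have d: "d > 0" using pos1 pos2 e unfolding d_def by simp
  have "\<forall>\<^sub>F p in at (0::real). p \<noteq> 0 \<and> \<bar>p\<bar> < d"
    using d by (auto simp: eventually_at dist_real_def intro!: exI[of _ d])
  then show "\<forall>\<^sub>F p in at 0. dist (inverse p *\<^sub>R (cfc (\<lambda>t. t powr (c * p)) S - id_blinfun)) (c *\<^sub>R cfc ln S) < e"
  proof eventually_elim
    case (elim p)
    then have p0: "p \<noteq> 0" and pd: "\<bar>p\<bar> < d" by auto
    have "\<bar>c * p\<bar> * \<Lambda> \<le> (\<bar>c\<bar> + 1) * \<bar>p\<bar> * \<Lambda>" using L by (simp add: abs_mult mult_right_mono)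
    also have "\<dots> \<le> (\<bar>c\<bar> + 1) * (1 / (2 * (\<bar>c\<bar> + 1) * \<Lambda>)) * \<Lambda>"
      using pd L by (intro mult_right_mono mult_left_mono) (auto simp: d_def)
    also have "\<dots> = 1/2" using pos2 by (simp add: field_simps)
    finally have q: "\<bar>c * p\<bar> * \<Lambda> \<le> 1/2" .
    have "inverse p *\<^sub>R (cfc (\<lambda>t. t powr (c * p)) S - id_blinfun) - c *\<^sub>R cfc ln S =
        inverse p *\<^sub>R (cfc (\<lambda>t. t powr (c * p)) S - id_blinfun - (c * p) *\<^sub>R cfc ln S)"
      using p0 by (simp add: algebra_simps)
    then have "dist (inverse p *\<^sub>R (cfc (\<lambda>t. t powr (c * p)) S - id_blinfun)) (c *\<^sub>R cfc ln S) =
        inverse \<bar>p\<bar> * norm (cfc (\<lambda>t. t powr (c * p)) S - id_blinfun - (c * p) *\<^sub>R cfc ln S)"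
      by (simp add: dist_norm)
    also have "\<dots> \<le> inverse \<bar>p\<bar> * (2 * (c * p)\<^sup>2 * \<Lambda>\<^sup>2)"
      using L(2)[OF q] by (intro mult_left_mono) auto
    also have "\<dots> = 2 * c\<^sup>2 * \<Lambda>\<^sup>2 * \<bar>p\<bar>" using p0 by (simp add: field_simps power2_eq_square abs_mult_self_eq)
    also have "\<dots> \<le> 2 * (c\<^sup>2 + 1) * \<Lambda>\<^sup>2 * d" using pd by (intro mult_mono) auto
    also have "\<dots> < e"
    proof -
      note pos = pos1
      have "d \<le> e / (2 * (c\<^sup>2 + 1) * \<Lambda>\<^sup>2 + 1)" by (simp add: d_def)
      then have "d * (2 * (c\<^sup>2 + 1) * \<Lambda>\<^sup>2 + 1) \<le> e" using pos by (simp add: pos_le_divide_eq)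
      then show ?thesis using d by (simp add: algebra_simps)
    qed
    finally show ?case .
  qed
qed

lemma powr_lim_id: "((\<lambda>p. cfc (\<lambda>t. t powr (c * p)) S) \<longlongrightarrow> id_blinfun) (at 0)"
  by (rule tendsto_from_deriv[OF powr_deriv_lim])

end



lemma sandwich_id:
  fixes U V :: "'a::real_normed_vector \<Rightarrow>\<^sub>L 'a"
  shows "(U o\<^sub>L V o\<^sub>L U) - id_blinfun = ((U - id_blinfun) o\<^sub>L V o\<^sub>L U) + ((V - id_blinfun) o\<^sub>L U) + (U - id_blinfun)"
  by (simp add: comp_diff_L)

lemma sandwich_deriv:
  fixes U V :: "real \<Rightarrow> ('a::real_normed_vector \<Rightarrow>\<^sub>L 'a)"
  assumes dU: "((\<lambda>p. inverse p *\<^sub>R (U p - id_blinfun)) \<longlongrightarrow> DU) (at 0)" and lU: "(U \<longlongrightarrow> id_blinfun) (at 0)"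
    and dV: "((\<lambda>p. inverse p *\<^sub>R (V p - id_blinfun)) \<longlongrightarrow> DV) (at 0)" and lV: "(V \<longlongrightarrow> id_blinfun) (at 0)"
  shows "((\<lambda>p. inverse p *\<^sub>R ((U p o\<^sub>L V p o\<^sub>L U p) - id_blinfun)) \<longlongrightarrow> DU + DV + DU) (at 0)"
proof -
  have eq: "inverse p *\<^sub>R ((U p o\<^sub>L V p o\<^sub>L U p) - id_blinfun) =
      ((inverse p *\<^sub>R (U p - id_blinfun)) o\<^sub>L V p o\<^sub>L U p) + ((inverse p *\<^sub>R (V p - id_blinfun)) o\<^sub>L U p)
      + inverse p *\<^sub>R (U p - id_blinfun)" for p
    by (simp only: sandwich_id comp_scale_L scaleR_add_right)
  have "((\<lambda>p. ((inverse p *\<^sub>R (U p - id_blinfun)) o\<^sub>L V p o\<^sub>L U p) + ((inverse p *\<^sub>R (V p - id_blinfun)) o\<^sub>L U p)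
      + inverse p *\<^sub>R (U p - id_blinfun)) \<longlongrightarrow> ((DU o\<^sub>L id_blinfun o\<^sub>L id_blinfun) + (DV o\<^sub>L id_blinfun) + DU)) (at 0)"
    by (intro tendsto_add bounded_bilinear.tendsto[OF bounded_bilinear_blinfun_compose] dU lU dV lV)
  then show ?thesis unfolding eq by simp
qed

lemma deriv_cfc_f:
  fixes C :: "real \<Rightarrow> ('a::{real_inner,complete_space} \<Rightarrow>\<^sub>L 'a)"
  assumes saC: "\<forall>\<^sub>F p in at 0. self_adjoint (C p)"
    and dC: "((\<lambda>p. inverse p *\<^sub>R (C p - id_blinfun)) \<longlongrightarrow> DC) (at 0)"
    and fd: "(f has_real_derivative \<alpha>) (at 1)" and f1: "f 1 = 1" and fc: "continuous_on {0<..} f"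
  shows "((\<lambda>p. inverse p *\<^sub>R (cfc f (C p) - id_blinfun)) \<longlongrightarrow> \<alpha> *\<^sub>R DC) (at 0)"
proof -
  have lC: "(C \<longlongrightarrow> id_blinfun) (at 0)" by (rule tendsto_from_deriv[OF dC])
  have evE: "\<forall>\<^sub>F p in at 0. norm (C p - id_blinfun) < r" if r: "r > 0" for r
  proof -
    have "((\<lambda>p. norm (C p - id_blinfun)) \<longlongrightarrow> norm (id_blinfun - id_blinfun :: 'a \<Rightarrow>\<^sub>L 'a)) (at 0)"
      by (intro tendsto_intros lC)
    then show ?thesis using r by (simp add: order_tendstoD(2))
  qed
  have key: "\<forall>\<^sub>F p in at 0. norm (cfc f (C p) - id_blinfun - \<alpha> *\<^sub>R (C p - id_blinfun)) \<le> \<epsilon> * norm (C p - id_blinfun)"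
    if eps: "\<epsilon> > 0" for \<epsilon>
  proof -
    obtain \<delta> where \<delta>: "\<delta> > 0" "\<And>t. \<bar>t - 1\<bar> < \<delta> \<Longrightarrow> \<bar>f t - 1 - \<alpha> * (t - 1)\<bar> \<le> \<epsilon> * \<bar>t - 1\<bar>"
      using deriv_est[OF fd f1 eps] by blast
    have "min \<delta> (1/2) > 0" using \<delta> by simp
    from eventually_conj[OF evE[OF this] saC] show ?thesis
    proof eventually_elim
      case (elim p)
      define T where "T = C p"
      have nT: "norm (T - id_blinfun) < \<delta>" "norm (T - id_blinfun) < 1/2" using elim by (auto simp: T_def)
      have saT: "self_adjoint T" using elim by (simp add: T_def)
      have spT: "\<bar>t - 1\<bar> \<le> norm (T - id_blinfun)" if "t \<in> op_spectrum T" for t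
        using spectrum_near_one[OF that] .
      have pos: "op_spectrum T \<subseteq> {0<..}" using spT nT(2) by force
      have fT: "continuous_on (op_spectrum T) f" using fc pos continuous_on_subset by blast
      have c1: "continuous_on (op_spectrum T) (\<lambda>t. f t - 1)" by (intro continuous_intros fT)
      have c2: "continuous_on (op_spectrum T) (\<lambda>t. \<alpha> * (t - 1))" by (intro continuous_intros)
      have c3: "continuous_on (op_spectrum T) (\<lambda>t. t - 1)" by (intro continuous_intros)
      have "cfc (\<lambda>t. f t - 1 - \<alpha> * (t - 1)) T = cfc (\<lambda>t. f t - 1) T - cfc (\<lambda>t. \<alpha> * (t - 1)) T"
        by (rule cfc_diff[OF saT c1 c2])
      also have "\<dots> = cfc f T - id_blinfun - \<alpha> *\<^sub>R (T - id_blinfun)"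
        using cfc_diff[OF saT fT continuous_on_const, of 1] cfc_scale[OF saT c3, of \<alpha>]
          cfc_diff[OF saT continuous_on_id continuous_on_const, of 1]
        by (simp add: cfc_const[OF saT] cfc_ident[OF saT] id_def)
      finally have eq: "cfc f T - id_blinfun - \<alpha> *\<^sub>R (T - id_blinfun) = cfc (\<lambda>t. f t - 1 - \<alpha> * (t - 1)) T" ..
      have "norm (cfc (\<lambda>t. f t - 1 - \<alpha> * (t - 1)) T) \<le> \<epsilon> * norm (T - id_blinfun)"
      proof (rule cfc_norm_bound[OF saT])
        show "continuous_on (op_spectrum T) (\<lambda>t. f t - 1 - \<alpha> * (t - 1))" by (intro continuous_intros c1)
        show "0 \<le> \<epsilon> * norm (T - id_blinfun)" using eps by simp
        fix t assume t: "t \<in> op_spectrum T"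
        have "\<bar>t - 1\<bar> < \<delta>" using spT[OF t] nT(1) by simp
        then have "\<bar>f t - 1 - \<alpha> * (t - 1)\<bar> \<le> \<epsilon> * \<bar>t - 1\<bar>" by (rule \<delta>(2))
        also have "\<dots> \<le> \<epsilon> * norm (T - id_blinfun)" using spT[OF t] eps by (intro mult_left_mono) auto
        finally show "\<bar>f t - 1 - \<alpha> * (t - 1)\<bar> \<le> \<epsilon> * norm (T - id_blinfun)" .
      qed
      then show ?case using eq by (simp add: T_def)
    qed
  qed
  show ?thesis
  proof (rule tendstoI)
    fix e :: real assume e: "e > 0"
    define M where "M = norm DC + 1"
    have M: "M > 0" unfolding M_def using norm_ge_zero[of DC] by linarith
    define \<eta> where "\<eta> = min 1 (e / (2 * (\<bar>\<alpha>\<bar> + 1)))"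
    have \<eta>: "\<eta> > 0" "\<eta> \<le> 1" "\<bar>\<alpha>\<bar> * \<eta> < e/2"
    proof -
      have a1: "\<bar>\<alpha>\<bar> + 1 > 0" using abs_ge_zero[of \<alpha>] by linarith
      show "\<eta> > 0" using e a1 by (simp add: \<eta>_def)
      show "\<eta> \<le> 1" by (simp add: \<eta>_def)
      have "\<eta> \<le> e / (2 * (\<bar>\<alpha>\<bar> + 1))" by (simp add: \<eta>_def)
      then have "\<bar>\<alpha>\<bar> * \<eta> \<le> \<bar>\<alpha>\<bar> * (e / (2 * (\<bar>\<alpha>\<bar> + 1)))" by (intro mult_left_mono) auto
      also have "\<dots> < (\<bar>\<alpha>\<bar> + 1) * (e / (2 * (\<bar>\<alpha>\<bar> + 1)))" using e a1 by (intro mult_strict_right_mono) auto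
      also have "\<dots> = e/2" using a1 by (simp add: field_simps)
      finally show "\<bar>\<alpha>\<bar> * \<eta> < e/2" .
    qed
    define \<epsilon> where "\<epsilon> = e / (2 * M)"
    have \<epsilon>: "\<epsilon> > 0" "\<epsilon> * M = e/2" using e M by (auto simp: \<epsilon>_def)
    have ev1: "\<forall>\<^sub>F p in at 0. dist (inverse p *\<^sub>R (C p - id_blinfun)) DC < \<eta>" by (rule tendstoD[OF dC \<eta>(1)])
    from eventually_conj[OF ev1 key[OF \<epsilon>(1)]]
    show "\<forall>\<^sub>F p in at 0. dist (inverse p *\<^sub>R (cfc f (C p) - id_blinfun)) (\<alpha> *\<^sub>R DC) < e"
    proof eventually_elim
      case (elim p)
      define G where "G = inverse p *\<^sub>R (C p - id_blinfun)"
      define R where "R = cfc f (C p) - id_blinfun - \<alpha> *\<^sub>R (C p - id_blinfun)"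
      have G: "norm (G - DC) < \<eta>" using elim by (simp add: G_def dist_norm)
      have nG: "norm G \<le> M" using G \<eta> norm_triangle_ineq2[of G DC] by (simp add: M_def)
      have R: "norm R \<le> \<epsilon> * norm (C p - id_blinfun)" using elim by (simp add: R_def)
      have "inverse p *\<^sub>R (cfc f (C p) - id_blinfun) - \<alpha> *\<^sub>R DC = \<alpha> *\<^sub>R (G - DC) + inverse p *\<^sub>R R"
        by (simp add: G_def R_def algebra_simps)
      then have "dist (inverse p *\<^sub>R (cfc f (C p) - id_blinfun)) (\<alpha> *\<^sub>R DC) = norm (\<alpha> *\<^sub>R (G - DC) + inverse p *\<^sub>R R)"
        by (simp only: dist_norm)
      also have "\<dots> \<le> norm (\<alpha> *\<^sub>R (G - DC)) + norm (inverse p *\<^sub>R R)"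
        by (rule norm_triangle_ineq)
      also have "norm (\<alpha> *\<^sub>R (G - DC)) \<le> \<bar>\<alpha>\<bar> * \<eta>" using G by (simp add: mult_left_mono)
      also have "norm (inverse p *\<^sub>R R) \<le> \<epsilon> * norm G"
      proof -
        have "norm (inverse p *\<^sub>R R) = \<bar>inverse p\<bar> * norm R" by simp
        also have "\<dots> \<le> \<bar>inverse p\<bar> * (\<epsilon> * norm (C p - id_blinfun))" using R by (intro mult_left_mono) auto
        also have "\<dots> = \<epsilon> * norm G" by (simp add: G_def)
        finally show ?thesis .
      qed
      also have "\<epsilon> * norm G \<le> \<epsilon> * M" using nG \<epsilon> by (intro mult_left_mono) auto
      finally show ?case using \<eta>(3) \<epsilon>(2) by simp
    qed
  qed
qed



lemma lin_aux: fixes a b :: "'v::real_vector"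
  shows "(1/2) *\<^sub>R b + c *\<^sub>R ((-1/2) *\<^sub>R b + 1 *\<^sub>R a + (-1/2) *\<^sub>R b) + (1/2) *\<^sub>R b = c *\<^sub>R a + (1 - c) *\<^sub>R b"
proof -
  have h: "(1/2) *\<^sub>R b + (1/2) *\<^sub>R b = b"
    by (metis scaleR_add_left scaleR_one field_sum_of_halves)
  have "(-1/2) *\<^sub>R b + 1 *\<^sub>R a + (-1/2) *\<^sub>R b = a - ((1/2) *\<^sub>R b + (1/2) *\<^sub>R b)"
    by (simp add: algebra_simps)
  also have "\<dots> = a - b" by (simp only: h)
  finally have 1: "(-1/2) *\<^sub>R b + 1 *\<^sub>R a + (-1/2) *\<^sub>R b = a - b" .
  show ?thesis unfolding 1
    by (simp add: scaleR_diff_right scaleR_diff_left algebra_simps scaleR_add_left[symmetric] del: scaleR_add_left)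
qed

lemma deriv_log:
  fixes P :: "real \<Rightarrow> ('a::{real_inner,complete_space} \<Rightarrow>\<^sub>L 'a)"
  assumes saP: "\<forall>\<^sub>F p in at 0. self_adjoint (P p)"
    and dP: "((\<lambda>p. inverse p *\<^sub>R (P p - id_blinfun)) \<longlongrightarrow> H) (at 0)"
  shows "((\<lambda>p. inverse p *\<^sub>R cfc ln (P p)) \<longlongrightarrow> H) (at 0)"
proof -
  have lP: "(P \<longlongrightarrow> id_blinfun) (at 0)" by (rule tendsto_from_deriv[OF dP])
  have nlim: "((\<lambda>p. norm (P p - id_blinfun)) \<longlongrightarrow> 0) (at 0)"
  proof -
    have "((\<lambda>p. norm (P p - id_blinfun)) \<longlongrightarrow> norm (id_blinfun - id_blinfun :: 'a \<Rightarrow>\<^sub>L 'a)) (at 0)"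
      by (intro tendsto_intros lP)
    then show ?thesis by simp
  qed
  have evE: "\<forall>\<^sub>F p in at 0. norm (P p - id_blinfun) < 1/2"
    using nlim by (rule order_tendstoD) simp
  have bound: "\<forall>\<^sub>F p in at 0. norm (inverse p *\<^sub>R (cfc ln (P p) - (P p - id_blinfun)))
      \<le> 2 * norm (P p - id_blinfun) * norm (inverse p *\<^sub>R (P p - id_blinfun))"
    using evE saP
  proof eventually_elim
    case (elim p)
    define T where "T = P p"
    have nT: "norm (T - id_blinfun) < 1/2" and saT: "self_adjoint T" using elim by (auto simp: T_def)
    have spT: "\<bar>t - 1\<bar> \<le> norm (T - id_blinfun)" if "t \<in> op_spectrum T" for t
      using spectrum_near_one[OF that] .
    have pos: "op_spectrum T \<subseteq> {0<..}" using spT nT by force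
    have lnT: "continuous_on (op_spectrum T) ln" using pos by (intro continuous_intros) auto
    have c3: "continuous_on (op_spectrum T) (\<lambda>t. t - 1)" by (intro continuous_intros)
    have "cfc (\<lambda>t. ln t - (t - 1)) T = cfc ln T - cfc (\<lambda>t. t - 1) T"
      by (rule cfc_diff[OF saT lnT c3])
    also have "\<dots> = cfc ln T - (T - id_blinfun)"
      using cfc_diff[OF saT continuous_on_id continuous_on_const, of 1]
      by (simp add: cfc_const[OF saT] cfc_ident[OF saT] id_def)
    finally have eq: "cfc ln T - (T - id_blinfun) = cfc (\<lambda>t. ln t - (t - 1)) T" ..
    have nb: "norm (cfc ln T - (T - id_blinfun)) \<le> 2 * (norm (T - id_blinfun))\<^sup>2"
      unfolding eq
    proof (rule cfc_norm_bound[OF saT])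
      show "continuous_on (op_spectrum T) (\<lambda>t. ln t - (t - 1))" by (intro continuous_intros lnT)
      show "0 \<le> 2 * (norm (T - id_blinfun))\<^sup>2" by simp
      fix t assume t: "t \<in> op_spectrum T"
      have "\<bar>t - 1\<bar> \<le> 1/2" using spT[OF t] nT by simp
      then have "\<bar>ln t - (t - 1)\<bar> \<le> 2 * (t - 1)\<^sup>2" by (rule ln_quad)
      also have "(t - 1)\<^sup>2 \<le> (norm (T - id_blinfun))\<^sup>2"
        using spT[OF t] by (metis abs_ge_zero power2_abs power_mono)
      finally show "\<bar>ln t - (t - 1)\<bar> \<le> 2 * (norm (T - id_blinfun))\<^sup>2" by simp
    qed
    have "norm (inverse p *\<^sub>R (cfc ln T - (T - id_blinfun))) = \<bar>inverse p\<bar> * norm (cfc ln T - (T - id_blinfun))"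
      by simp
    also have "\<dots> \<le> \<bar>inverse p\<bar> * (2 * (norm (T - id_blinfun))\<^sup>2)" using nb by (intro mult_left_mono) auto
    also have "\<dots> = 2 * norm (T - id_blinfun) * norm (inverse p *\<^sub>R (T - id_blinfun))"
      by (simp add: power2_eq_square)
    finally show ?case by (simp add: T_def)
  qed
  have g0: "((\<lambda>p. 2 * norm (P p - id_blinfun) * norm (inverse p *\<^sub>R (P p - id_blinfun))) \<longlongrightarrow> 2 * 0 * norm H) (at 0)"
    by (intro tendsto_intros nlim dP)
  have "((\<lambda>p. inverse p *\<^sub>R (cfc ln (P p) - (P p - id_blinfun))) \<longlongrightarrow> 0) (at 0)"
    by (rule Lim_null_comparison[OF bound]) (use g0 in simp)
  from tendsto_add[OF dP this] show ?thesis by (simp add: algebra_simps)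
qed

theorem theorem5p1:
  fixes f f' :: "real \<Rightarrow> real"
    and A B :: "'a::{real_inner,complete_space} \<Rightarrow>\<^sub>L 'a"
  assumes f_deriv: "\<And>x. x > 0 \<Longrightarrow> (f has_real_derivative f' x) (at x)"
    and f'_cont: "continuous_on {0<..} f'"
    and f_pos: "\<And>x. x > 0 \<Longrightarrow> f x > 0"
    and f_one: "f 1 = 1"
    and A_pos: "positive_op A" and A_inv: "op_invertible A"
    and B_pos: "positive_op B" and B_inv: "op_invertible B"
  shows "((\<lambda>p. cfc (\<lambda>t. t powr (1/p))
             (persp f (cfc (\<lambda>t. t powr p) A) (cfc (\<lambda>t. t powr p) B)))
          \<longlongrightarrow> cfc exp (f' 1 *\<^sub>R cfc ln A + (1 - f' 1) *\<^sub>R cfc ln B)) (at (0::real))"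
proof -
  have saA: "self_adjoint A" using A_pos by (simp add: positive_op_def)
  have saB: "self_adjoint B" using B_pos by (simp add: positive_op_def)
  have spA: "op_spectrum A \<subseteq> {0<..}" by (rule pos_inv_spectrum[OF A_pos A_inv])
  have spB: "op_spectrum B \<subseteq> {0<..}" by (rule pos_inv_spectrum[OF B_pos B_inv])
  have fc: "continuous_on {0<..} f"
    by (rule DERIV_continuous_on) (use f_deriv in \<open>auto intro: has_field_derivative_at_within\<close>)
  define \<alpha> where "\<alpha> = f' 1"
  have fd1: "(f has_real_derivative \<alpha>) (at 1)" using f_deriv[of 1] by (simp add: \<alpha>_def)
  define LA where "LA = cfc ln A"
  define LB where "LB = cfc ln B"
  define H where "H = \<alpha> *\<^sub>R LA + (1 - \<alpha>) *\<^sub>R LB"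
  have saH: "self_adjoint H" unfolding H_def LA_def LB_def
    by (intro sa_add sa_scale cfc_sa[OF saA pos_cont_ln[OF saA spA]] cfc_sa[OF saB pos_cont_ln[OF saB spB]])
  define X where "X p = cfc (\<lambda>t. t powr (1 * p)) A" for p
  define Bh where "Bh p = cfc (\<lambda>t. t powr ((1/2) * p)) B" for p
  define Bm where "Bm p = cfc (\<lambda>t. t powr ((-1/2) * p)) B" for p
  define C where "C p = Bm p o\<^sub>L X p o\<^sub>L Bm p" for p
  define F where "F p = cfc f (C p)" for p
  define P where "P p = Bh p o\<^sub>L F p o\<^sub>L Bh p" for p
  have saX: "self_adjoint (X p)" for p unfolding X_def by (rule cfc_sa[OF saA pos_cont_powr[OF saA spA]])
  have saBm: "self_adjoint (Bm p)" for p unfolding Bm_def by (rule cfc_sa[OF saB pos_cont_powr[OF saB spB]])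
  have saBh: "self_adjoint (Bh p)" for p unfolding Bh_def by (rule cfc_sa[OF saB pos_cont_powr[OF saB spB]])
  have saC: "self_adjoint (C p)" for p unfolding C_def by (rule sa_sandwich[OF saBm saX])
  have persp_eq: "persp f (cfc (\<lambda>t. t powr p) A) (cfc (\<lambda>t. t powr p) B) = P p" for p
  proof -
    have img: "(\<lambda>t. t powr p) ` op_spectrum B \<subseteq> {0<..}" using spB by auto
    have s1: "cfc sqrt (cfc (\<lambda>t. t powr p) B) = Bh p"
    proof -
      have "cfc sqrt (cfc (\<lambda>t. t powr p) B) = cfc (\<lambda>t. sqrt (t powr p)) B"
        by (rule cfc_compose[OF saB pos_cont_powr[OF saB spB]]) (intro continuous_intros)
      also have "\<dots> = Bh p" unfolding Bh_def
      proof (rule cfc_cong)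
        fix t assume "t \<in> op_spectrum B"
        then have "t > 0" using spB by auto
        then show "sqrt (t powr p) = t powr ((1/2) * p)"
          by (simp add: powr_half_sqrt[symmetric] powr_powr mult.commute)
      qed
      finally show ?thesis .
    qed
    have s2: "cfc (\<lambda>t. t powr (-1/2)) (cfc (\<lambda>t. t powr p) B) = Bm p"
    proof -
      have "cfc (\<lambda>t. t powr (-1/2)) (cfc (\<lambda>t. t powr p) B) = cfc (\<lambda>t. (t powr p) powr (-1/2)) B"
        by (rule cfc_compose[OF saB pos_cont_powr[OF saB spB]]) (use img in \<open>intro continuous_intros, auto\<close>)
      also have "\<dots> = Bm p" unfolding Bm_def
        by (rule cfc_cong) (simp add: powr_powr mult.commute)
      finally show ?thesis .
    qed
    have s3: "cfc (\<lambda>t. t powr p) A = X p" by (simp add: X_def)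
    show ?thesis unfolding persp_def s1 s2 s3 P_def F_def C_def ..
  qed
  have dX: "((\<lambda>p. inverse p *\<^sub>R (X p - id_blinfun)) \<longlongrightarrow> 1 *\<^sub>R LA) (at 0)"
    unfolding X_def LA_def by (rule powr_deriv_lim[OF saA spA])
  have lX: "(X \<longlongrightarrow> id_blinfun) (at 0)" by (rule tendsto_from_deriv[OF dX])
  have dBh: "((\<lambda>p. inverse p *\<^sub>R (Bh p - id_blinfun)) \<longlongrightarrow> (1/2) *\<^sub>R LB) (at 0)"
    unfolding Bh_def LB_def by (rule powr_deriv_lim[OF saB spB])
  have lBh: "(Bh \<longlongrightarrow> id_blinfun) (at 0)" by (rule tendsto_from_deriv[OF dBh])
  have dBm: "((\<lambda>p. inverse p *\<^sub>R (Bm p - id_blinfun)) \<longlongrightarrow> (-1/2) *\<^sub>R LB) (at 0)"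
    unfolding Bm_def LB_def by (rule powr_deriv_lim[OF saB spB])
  have lBm: "(Bm \<longlongrightarrow> id_blinfun) (at 0)" by (rule tendsto_from_deriv[OF dBm])
  define DC where "DC = (-1/2) *\<^sub>R LB + 1 *\<^sub>R LA + (-1/2) *\<^sub>R LB"
  have dC: "((\<lambda>p. inverse p *\<^sub>R (C p - id_blinfun)) \<longlongrightarrow> DC) (at 0)"
    unfolding C_def DC_def by (rule sandwich_deriv[OF dBm lBm dX lX])
  have dF: "((\<lambda>p. inverse p *\<^sub>R (F p - id_blinfun)) \<longlongrightarrow> \<alpha> *\<^sub>R DC) (at 0)"
    unfolding F_def by (rule deriv_cfc_f[OF _ dC fd1 f_one fc]) (simp add: saC)
  have lF: "(F \<longlongrightarrow> id_blinfun) (at 0)" by (rule tendsto_from_deriv[OF dF])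
  have dP': "((\<lambda>p. inverse p *\<^sub>R (P p - id_blinfun)) \<longlongrightarrow> (1/2) *\<^sub>R LB + \<alpha> *\<^sub>R DC + (1/2) *\<^sub>R LB) (at 0)"
    unfolding P_def by (rule sandwich_deriv[OF dBh lBh dF lF])
  have HH: "(1/2) *\<^sub>R LB + \<alpha> *\<^sub>R DC + (1/2) *\<^sub>R LB = H"
    unfolding H_def DC_def by (rule lin_aux)
  have dP: "((\<lambda>p. inverse p *\<^sub>R (P p - id_blinfun)) \<longlongrightarrow> H) (at 0)" using dP' HH by simp
  have lC: "(C \<longlongrightarrow> id_blinfun) (at 0)" by (rule tendsto_from_deriv[OF dC])
  have evC: "\<forall>\<^sub>F p in at 0. norm (C p - id_blinfun) < 1/2"
  proof -
    have "((\<lambda>p. norm (C p - id_blinfun)) \<longlongrightarrow> norm (id_blinfun - id_blinfun :: 'a \<Rightarrow>\<^sub>L 'a)) (at 0)"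
      by (intro tendsto_intros lC)
    then show ?thesis by (rule order_tendstoD) simp
  qed
  have saP: "\<forall>\<^sub>F p in at 0. self_adjoint (P p)"
    using evC
  proof eventually_elim
    case (elim p)
    have "op_spectrum (C p) \<subseteq> {0<..}" using spectrum_near_one[of _ "C p"] elim by force
    then have "continuous_on (op_spectrum (C p)) f" using fc continuous_on_subset by blast
    then have "self_adjoint (F p)" unfolding F_def by (rule cfc_sa[OF saC])
    then show ?case unfolding P_def by (rule sa_sandwich[OF saBh])
  qed
  define L where "L p = inverse p *\<^sub>R cfc ln (P p)" for p
  have dL: "(L \<longlongrightarrow> H) (at 0)" unfolding L_def by (rule deriv_log[OF saP dP])
  have lP: "(P \<longlongrightarrow> id_blinfun) (at 0)" by (rule tendsto_from_deriv[OF dP])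
  have evP: "\<forall>\<^sub>F p in at 0. norm (P p - id_blinfun) < 1/2"
  proof -
    have "((\<lambda>p. norm (P p - id_blinfun)) \<longlongrightarrow> norm (id_blinfun - id_blinfun :: 'a \<Rightarrow>\<^sub>L 'a)) (at 0)"
      by (intro tendsto_intros lP)
    then show ?thesis by (rule order_tendstoD) simp
  qed
  have ev4: "\<forall>\<^sub>F p in at 0. self_adjoint (L p) \<and> cfc (\<lambda>t. t powr (1/p)) (P p) = cfc exp (L p)"
    using evP saP
  proof eventually_elim
    case (elim p)
    define T where "T = P p"
    have saT: "self_adjoint T" using elim by (simp add: T_def)
    have pos: "op_spectrum T \<subseteq> {0<..}" using spectrum_near_one[of _ T] elim by (force simp: T_def)
    have lnT: "continuous_on (op_spectrum T) ln" using pos by (intro continuous_intros) auto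
    have g: "continuous_on (op_spectrum T) (\<lambda>t. inverse p * ln t)" by (intro continuous_intros lnT)
    have "cfc (\<lambda>t. t powr (1/p)) T = cfc (\<lambda>t. exp (inverse p * ln t)) T"
    proof (rule cfc_cong)
      fix t assume "t \<in> op_spectrum T"
      then have "t > 0" using pos by auto
      then show "t powr (1/p) = exp (inverse p * ln t)" by (simp add: powr_def divide_inverse mult.commute)
    qed
    also have "\<dots> = cfc exp (cfc (\<lambda>t. inverse p * ln t) T)"
      by (rule cfc_compose[OF saT g, symmetric]) (intro continuous_intros)
    also have "cfc (\<lambda>t. inverse p * ln t) T = L p"
      unfolding L_def T_def[symmetric] by (rule cfc_scale[OF saT lnT])
    finally have 1: "cfc (\<lambda>t. t powr (1/p)) (P p) = cfc exp (L p)" by (simp add: T_def)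
    have "self_adjoint (L p)" unfolding L_def T_def[symmetric] by (intro sa_scale cfc_sa[OF saT lnT])
    then show ?case using 1 by simp
  qed
  have lim: "((\<lambda>p. cfc exp (L p)) \<longlongrightarrow> cfc exp H) (at 0)"
    by (rule cfc_continuous_op[OF _ dL saH]) (use ev4 in \<open>auto intro: continuous_intros elim: eventually_mono\<close>)
  have "((\<lambda>p. cfc (\<lambda>t. t powr (1/p)) (P p)) \<longlongrightarrow> cfc exp H) (at 0)"
    using lim by (rule tendsto_cong[THEN iffD2, rotated]) (use ev4 in \<open>auto elim: eventually_mono\<close>)
  then show ?thesis by (simp add: persp_eq H_def LA_def LB_def \<alpha>_def)
qed


end
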